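(* For every $E\ge0$, $$S^-(E)=\sup_{k\in K(E)}F(k)-(E+\bar V^-).$$ Moreover $K(E)\neq\emptyset$ if and only if $E\in[E^-_{-\infty},E^+_{-\infty}]$.
   Context: Let $0<\rho_-<\rho_+<1$, $\varphi_\pm=\log\frac{\rho_\pm}{1-\rho_\pm}$, $s(\theta)=\theta\log\theta+(1-\theta)\log(1-\theta)$ on $[0,1]$, $\chi(\rho)=\rho(1-\rho)$. $\mathcal M$ is the set of measurable $\rho:[-1,1]\to[0,1]$, $\mathbb S(\rho)=-\frac12\int_{-1}^1s(\rho(x))dx$, $\mathcal H(\rho,\varphi)=\frac12\int_{-1}^1[(1-\rho)\varphi-\log(1+e^\varphi)]dx$, $\mathcal F=\{\varphi\in C^1([-1,1]):\varphi(\pm1)=\varphi_\pm,\varphi'>0\}$, $\bar V^-=\log(\max_{\rho\in[\rho_-,\rho_+]}\chi(\rho))$, $V^-(\rho)=-\mathbb S(\rho)+\sup_{\varphi\in\mathcal F}\mathcal H(\rho,\varphi)-\bar V^-$, $S^-(E)=\sup\{\mathbb S(\rho):\rho\in\mathcal M,\ V^-(\rho)+\mathbb S(\rho)=E\}$ (sup of empty set $=-\infty$), $E^-_{-\infty}=\inf_{\mathcal M}(\mathbb S+V^-)$, $E^+_{-\infty}=\sup_{\mathcal M}(\mathbb S+V^-)$. Let $m_0=\min_{\rho\in[\rho_-,\rho_+]}(-s(\rho))$, $M_0=\max_{\rho\in[\rho_-,\rho_+]}(-s(\rho))$, and $\gamma_\pm(y)=y\varphi_\pm-\log(1+e^{\varphi_\pm})$.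 For $E\ge0$, $K(E)\subset\mathbb R^4$ is the set of $(x_-,x_+,y_-,y_+)$ with $0\le y_-\le\rho_-<\rho_+\le y_+\le1$, $-1\le x_-\le x_+\le1$, $\frac12\big[(x_-+1)(\gamma_-(y_-)+m_0)+(1-x_+)(\gamma_+(y_+)+m_0)\big]\ge (E+\bar V^-)+m_0$ and $\frac12\big[(x_-+1)(\gamma_-(y_-)+M_0)+(1-x_+)(\gamma_+(y_+)+M_0)\big]\le (E+\bar V^-)+M_0$. On $K(E)$, $F(x_-,x_+,y_-,y_+)=\frac12\big[(x_-+1)\big((-s)(y_-)+\gamma_-(y_-)\big)+(1-x_+)\big((-s)(y_+)+\gamma_+(y_+)\big)\big]$; the supremum over the empty set is $-\infty$. *)

theory Defs
  imports "HOL-Analysis.Analysis"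
begin

text \<open>Parameters rm = rho_minus, rp = rho_plus (0 < rm < rp < 1) are explicit arguments.\<close>

definition xlnx :: "real \<Rightarrow> real" where
  "xlnx t = (if t = 0 then 0 else t * ln t)"

definition sfun :: "real \<Rightarrow> real" where
  "sfun t = xlnx t + xlnx (1 - t)"

definition chi :: "real \<Rightarrow> real" where
  "chi r = r * (1 - r)"

definition phi_b :: "real \<Rightarrow> real" where
  "phi_b r = ln (r / (1 - r))"

definition Mset :: "(real \<Rightarrow> real) set" where
  "Mset = {\<rho>. \<rho> \<in> borel_measurable (lebesgue_on {-1..1}) \<and> (\<forall>x\<in>{-1..1}. 0 \<le> \<rho> x \<and> \<rho> x \<le> 1)}"

definition SS :: "(real \<Rightarrow> real) \<Rightarrow> real" where
  "SS \<rho> = - (1/2) * integral\<^sup>L (lebesgue_on {-1..1}) (\<lambda>x. sfun (\<rho> x))"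

definition HH :: "(real \<Rightarrow> real) \<Rightarrow> (real \<Rightarrow> real) \<Rightarrow> real" where
  "HH \<rho> \<phi> = (1/2) * integral\<^sup>L (lebesgue_on {-1..1})
      (\<lambda>x. (1 - \<rho> x) * \<phi> x - ln (1 + exp (\<phi> x)))"

definition Fset :: "real \<Rightarrow> real \<Rightarrow> (real \<Rightarrow> real) set" where
  "Fset rm rp = {\<phi>. (\<exists>\<phi>'. continuous_on {-1..1} \<phi>' \<and>
        (\<forall>x\<in>{-1..1}. (\<phi> has_real_derivative \<phi>' x) (at x within {-1..1})) \<and>
        (\<forall>x\<in>{-1..1}. \<phi>' x > 0)) \<and>
        \<phi> (-1) = phi_b rm \<and> \<phi> 1 = phi_b rp}"

definition Vbar :: "real \<Rightarrow> real \<Rightarrow> real" where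
  "Vbar rm rp = ln (Sup (chi ` {rm..rp}))"

definition Vminus :: "real \<Rightarrow> real \<Rightarrow> (real \<Rightarrow> real) \<Rightarrow> real" where
  "Vminus rm rp \<rho> = - SS \<rho> + Sup (HH \<rho> ` Fset rm rp) - Vbar rm rp"

definition Sminus :: "real \<Rightarrow> real \<Rightarrow> real \<Rightarrow> ereal" where
  "Sminus rm rp E = Sup ((\<lambda>\<rho>. ereal (SS \<rho>)) ` {\<rho> \<in> Mset. Vminus rm rp \<rho> + SS \<rho> = E})"

definition Eminf_lo :: "real \<Rightarrow> real \<Rightarrow> real" where
  "Eminf_lo rm rp = Inf ((\<lambda>\<rho>. SS \<rho> + Vminus rm rp \<rho>) ` Mset)"

definition Eminf_hi :: "real \<Rightarrow> real \<Rightarrow> real" where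
  "Eminf_hi rm rp = Sup ((\<lambda>\<rho>. SS \<rho> + Vminus rm rp \<rho>) ` Mset)"

definition m0 :: "real \<Rightarrow> real \<Rightarrow> real" where
  "m0 rm rp = Inf ((\<lambda>r. - sfun r) ` {rm..rp})"

definition M0 :: "real \<Rightarrow> real \<Rightarrow> real" where
  "M0 rm rp = Sup ((\<lambda>r. - sfun r) ` {rm..rp})"

definition gamma :: "real \<Rightarrow> real \<Rightarrow> real" where
  "gamma \<phi> y = y * \<phi> - ln (1 + exp \<phi>)"

definition Kset :: "real \<Rightarrow> real \<Rightarrow> real \<Rightarrow> (real \<times> real \<times> real \<times> real) set" where
  "Kset rm rp E = {(xm, xp, ym, yp).
      0 \<le> ym \<and> ym \<le> rm \<and> rm < rp \<and> rp \<le> yp \<and> yp \<le> 1 \<and>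
      -1 \<le> xm \<and> xm \<le> xp \<and> xp \<le> 1 \<and>
      (1/2) * ((xm + 1) * (gamma (phi_b rm) ym + m0 rm rp) + (1 - xp) * (gamma (phi_b rp) yp + m0 rm rp))
        \<ge> (E + Vbar rm rp) + m0 rm rp \<and>
      (1/2) * ((xm + 1) * (gamma (phi_b rm) ym + M0 rm rp) + (1 - xp) * (gamma (phi_b rp) yp + M0 rm rp))
        \<le> (E + Vbar rm rp) + M0 rm rp}"

definition Ffun :: "real \<Rightarrow> real \<Rightarrow> real \<times> real \<times> real \<times> real \<Rightarrow> real" where
  "Ffun rm rp k = (case k of (xm, xp, ym, yp) \<Rightarrow>
      (1/2) * ((xm + 1) * (- sfun ym + gamma (phi_b rm) ym) + (1 - xp) * (- sfun yp + gamma (phi_b rp) yp)))"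

end

theory Submission
  imports Defs
begin


definition Lf :: "real \<Rightarrow> real" where "Lf t = ln (1 + exp t)"

lemma sfun_0[simp]: "sfun 0 = 0" and sfun_1[simp]: "sfun 1 = 0"
  by (simp_all add: sfun_def xlnx_def)

lemma sfun_open: "0 < u \<Longrightarrow> u < 1 \<Longrightarrow> sfun u = u * ln u + (1-u) * ln (1-u)"
  by (simp add: sfun_def xlnx_def)

lemma legendre:
  assumes "0 \<le> u" "u \<le> 1"
  shows "u * t - Lf t \<le> sfun u"
proof -
  consider "u = 0" | "u = 1" | "0 < u \<and> u < 1" using assms by linarith
  then show ?thesis
  proof cases
    case 1 then show ?thesis by (simp add: Lf_def)
  next
    case 2
    have "t = ln (exp t)" by simp
    also have "\<dots> \<le> ln (1 + exp t)" by (subst ln_le_cancel_iff) (auto simp: add_pos_pos)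
    finally show ?thesis using 2 by (simp add: Lf_def)
  next
    case 3
    define p where "p = exp t / (1 + exp t)"
    have p0: "0 < p" and p1: "p < 1" unfolding p_def by (auto simp: add_pos_pos)
    have pos: "1 + exp t > 0" by (simp add: add_pos_pos)
    have "1 - p = 1 / (1 + exp t)" unfolding p_def using pos by (simp add: field_simps)
    hence Lp: "Lf t = - ln (1 - p)" unfolding Lf_def by (simp add: ln_div add_pos_pos)
    have "p / (1 - p) = p * (1 + exp t)" using \<open>1 - p = 1 / (1 + exp t)\<close> by simp
    also have "\<dots> = exp t" unfolding p_def using pos by simp
    finally have "p / (1 - p) = exp t" .
    hence "t = ln (p / (1 - p))" by simp
    also have "\<dots> = ln p - ln (1 - p)" using p0 p1 by (simp add: ln_div)
    finally have tp: "t = ln p - ln (1 - p)" .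
    have a: "ln (p / u) \<le> p / u - 1" using p0 3 by (intro ln_le_minus_one) auto
    have b: "ln ((1-p) / (1-u)) \<le> (1-p) / (1-u) - 1" using p1 3 by (intro ln_le_minus_one) auto
    have a': "u * ln (p/u) \<le> p - u"
    proof -
      have "u * ln (p/u) \<le> u * (p/u - 1)" using a 3 by (intro mult_left_mono) auto
      also have "\<dots> = p - u" using 3 by (simp add: right_diff_distrib)
      finally show ?thesis .
    qed
    have b': "(1-u) * ln ((1-p)/(1-u)) \<le> u - p"
    proof -
      have "(1-u) * ln ((1-p)/(1-u)) \<le> (1-u) * ((1-p)/(1-u) - 1)" using b 3 by (intro mult_left_mono) auto
      also have "\<dots> = u - p" using 3 by (simp add: field_simps)
      finally show ?thesis .
    qed
    have ea: "u * ln (p/u) = u * ln p - u * ln u" using p0 3 by (simp add: ln_div right_diff_distrib)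
    have eb: "(1-u) * ln ((1-p)/(1-u)) = (1-u) * ln (1-p) - (1-u) * ln (1-u)"
      using p1 3 by (simp add: ln_div right_diff_distrib)
    have ec: "(1-u) * ln (1-p) = ln (1-p) - u * ln (1-p)" by (simp add: left_diff_distrib)
    have ed: "u * (ln p - ln (1 - p)) = u * ln p - u * ln (1-p)" by (simp add: right_diff_distrib)
    have "u * t - Lf t = u * (ln p - ln (1 - p)) + ln (1-p)" unfolding Lp unfolding tp by simp
    thus ?thesis unfolding sfun_open[OF conjunct1[OF 3] conjunct2[OF 3]] using a' b' ea eb ec ed by linarith
  qed
qed

lemma legendre_eq:
  assumes "0 < u" "u < 1"
  shows "u * ln (u / (1-u)) - Lf (ln (u / (1-u))) = sfun u"
proof -
  have "1 + u / (1-u) = 1 / (1-u)" using assms by (simp add: field_simps)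
  moreover have "exp (ln (u / (1-u))) = u / (1-u)" using assms by simp
  ultimately have "Lf (ln (u / (1-u))) = - ln (1-u)" using assms unfolding Lf_def
    by (simp add: ln_div)
  moreover have "ln (u / (1-u)) = ln u - ln (1-u)" using assms by (simp add: ln_div)
  moreover have "u * (ln u - ln (1-u)) = u * ln u - u * ln (1-u)" by (simp add: right_diff_distrib)
  moreover have "(1-u) * ln (1-u) = ln (1-u) - u * ln (1-u)" by (simp add: left_diff_distrib)
  ultimately show ?thesis using assms by (simp add: sfun_open)
qed

lemma Lf_pos: "0 < Lf t" unfolding Lf_def by (simp add: add_pos_pos)
lemma Lf_mono: "s \<le> t \<Longrightarrow> Lf s \<le> Lf t" unfolding Lf_def
  by (subst ln_le_cancel_iff) (auto simp: add_pos_pos)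
lemma Lf_le_exp: "Lf t \<le> exp t" unfolding Lf_def
  by (rule ln_add_one_self_le_self) simp
lemma Lf_minus: "Lf t - t = Lf (- t)"
proof -
  have "1 + exp t = exp t * (1 + exp (-t))" by (simp add: field_simps exp_minus)
  moreover have "0 < 1 + exp (-t)" by (simp add: add_pos_pos)
  ultimately have "ln (1 + exp t) = t + ln (1 + exp (-t))"
    by (simp add: ln_mult)
  thus ?thesis unfolding Lf_def by simp
qed
lemma Lf_0: "Lf 0 = ln 2" unfolding Lf_def by simp

lemma gamma_Lf: "gamma p y = y * p - Lf p" by (simp add: gamma_def Lf_def)

lemma inf_lemma:
  assumes a: "0 \<le> a" and y: "0 \<le> y" "y \<le> 1" and H: "\<And>t. X \<le> a * (Lf t - y * t)"
  shows "X \<le> a * (- sfun y)"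
proof -
  consider "y = 0" | "y = 1" | "0 < y \<and> y < 1" using y by linarith
  then show ?thesis
  proof cases
    case 3
    have "X \<le> a * (Lf (ln (y/(1-y))) - y * ln (y/(1-y)))" by (rule H)
    also have "\<dots> = a * (- sfun y)"
    proof -
      have "Lf (ln (y/(1-y))) - y * ln (y/(1-y)) = - sfun y" using legendre_eq[of y] 3 by linarith
      thus ?thesis by simp
    qed
    finally show ?thesis .
  next
    case 1
    show ?thesis
    proof (rule ccontr)
      assume "\<not> ?thesis"
      hence X: "X > 0" using 1 by simp
      have "X \<le> a * Lf (ln (X / (2 * (a+1))))" using H[of "ln (X / (2 * (a+1)))"] 1 by simp
      also have "\<dots> \<le> a * (X / (2 * (a+1)))"
        using Lf_le_exp[of "ln (X / (2 * (a+1)))"] X a by (intro mult_left_mono) auto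
      also have "\<dots> < X"
      proof -
        have "a / (2*(a+1)) < 1" using a by (simp add: field_simps)
        hence "X * (a / (2*(a+1))) < X * 1" using X by (intro mult_strict_left_mono)
        thus ?thesis by (simp add: ac_simps)
      qed
      finally show False by simp
    qed
  next
    case 2
    show ?thesis
    proof (rule ccontr)
      assume "\<not> ?thesis"
      hence X: "X > 0" using 2 by simp
      define t where "t = - ln (X / (2 * (a+1)))"
      have "X \<le> a * (Lf t - t)" using H[of t] 2 by simp
      also have "\<dots> = a * Lf (- t)" by (simp add: Lf_minus)
      also have "\<dots> \<le> a * (X / (2 * (a+1)))"
        using Lf_le_exp[of "-t"] X a unfolding t_def by (intro mult_left_mono) auto
      also have "\<dots> < X"
      proof -
        have "a / (2*(a+1)) < 1" using a by (simp add: field_simps)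
        hence "X * (a / (2*(a+1))) < X * 1" using X by (intro mult_strict_left_mono)
        thus ?thesis by (simp add: ac_simps)
      qed
      finally show False by simp
    qed
  qed
qed

lemma sfun_le0: "0 \<le> u \<Longrightarrow> u \<le> 1 \<Longrightarrow> sfun u \<le> 0"
  unfolding sfun_def xlnx_def
  by (auto intro!: add_nonpos_nonpos mult_nonneg_nonpos)

lemma sfun_ge: "0 \<le> u \<Longrightarrow> u \<le> 1 \<Longrightarrow> - sfun u \<le> ln 2"
  using legendre[of u 0] by (simp add: Lf_0)

lemma sfun_half: "sfun (1/2) = - ln 2"
  by (simp add: sfun_def xlnx_def ln_div)

lemma sfun_sym: "sfun (1 - u) = sfun u" by (simp add: sfun_def)

lemma phi_b_legendre: "0 < r \<Longrightarrow> r < 1 \<Longrightarrow> gamma (phi_b r) r = sfun r"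
  using legendre_eq[of r] by (simp add: gamma_Lf phi_b_def)

lemma tangent_left:
  assumes r: "0 < r" "r < 1" and u: "u \<le> r" and t: "phi_b r \<le> t"
  shows "u * t - Lf t \<le> gamma (phi_b r) u"
proof -
  have "r * t - Lf t \<le> sfun r" using legendre[of r t] r by simp
  also have "\<dots> = r * phi_b r - Lf (phi_b r)" using phi_b_legendre[OF r] by (simp add: gamma_Lf)
  finally have "- Lf t \<le> r * (phi_b r - t) - Lf (phi_b r)" by (simp add: algebra_simps)
  moreover have "(u - r) * (t - phi_b r) \<le> 0" using u t by (intro mult_nonpos_nonneg) auto
  ultimately show ?thesis by (simp add: gamma_Lf algebra_simps)
qed

lemma tangent_right:
  assumes r: "0 < r" "r < 1" and u: "r \<le> u" and t: "t \<le> phi_b r"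
  shows "u * t - Lf t \<le> gamma (phi_b r) u"
proof -
  have "r * t - Lf t \<le> sfun r" using legendre[of r t] r by simp
  also have "\<dots> = r * phi_b r - Lf (phi_b r)" using phi_b_legendre[OF r] by (simp add: gamma_Lf)
  finally have "- Lf t \<le> r * (phi_b r - t) - Lf (phi_b r)" by (simp add: algebra_simps)
  moreover have "(u - r) * (t - phi_b r) \<le> 0" using u t by (intro mult_nonneg_nonpos) auto
  ultimately show ?thesis by (simp add: gamma_Lf algebra_simps)
qed

lemma concave2:
  assumes w: "0 \<le> w1" "0 \<le> w2" "0 < w1 + w2" and y: "0 \<le> y1" "y1 \<le> 1" "0 \<le> y2" "y2 \<le> 1"
  shows "w1 * (- sfun y1) + w2 * (- sfun y2) \<le> (w1 + w2) * (- sfun ((w1*y1 + w2*y2)/(w1+w2)))"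
proof (rule inf_lemma)
  show "0 \<le> w1 + w2" using w by simp
  show "0 \<le> (w1*y1 + w2*y2)/(w1+w2)" using w y by simp
  show "(w1*y1 + w2*y2)/(w1+w2) \<le> 1" using w y
  proof -
    have "w1*y1 \<le> w1" "w2*y2 \<le> w2" using w y by (simp_all add: mult_left_le)
    thus ?thesis using w by (simp add: divide_le_eq_1)
  qed
  fix t
  have "w1 * (- sfun y1) \<le> w1 * (Lf t - y1 * t)" using legendre[of y1 t] y w by (intro mult_left_mono) auto
  moreover have "w2 * (- sfun y2) \<le> w2 * (Lf t - y2 * t)" using legendre[of y2 t] y w by (intro mult_left_mono) auto
  moreover have "(w1 + w2) * (Lf t - (w1*y1 + w2*y2)/(w1+w2) * t) = w1 * (Lf t - y1 * t) + w2 * (Lf t - y2 * t)"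
    using w by (simp add: field_simps)
  ultimately show "w1 * (- sfun y1) + w2 * (- sfun y2) \<le> (w1 + w2) * (Lf t - (w1*y1 + w2*y2)/(w1+w2) * t)"
    by linarith
qed

lemma phi_b_mono: "0 < a \<Longrightarrow> a < b \<Longrightarrow> b < 1 \<Longrightarrow> phi_b a < phi_b b"
  unfolding phi_b_def by (subst ln_less_cancel_iff) (auto intro!: frac_less)

lemma phi_b_neg: "0 < a \<Longrightarrow> a < 1/2 \<Longrightarrow> phi_b a < 0"
  unfolding phi_b_def by (subst ln_less_zero_iff) (auto simp: field_simps)
lemma phi_b_pos: "1/2 < a \<Longrightarrow> a < 1 \<Longrightarrow> phi_b a > 0"
  unfolding phi_b_def by (subst ln_gt_zero_iff) (auto simp: field_simps)
lemma phi_b_half: "phi_b (1/2) = 0" by (simp add: phi_b_def)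


abbreviation "LI \<equiv> lebesgue_on {-1..(1::real)}"

lemma xlnx_meas[measurable]: "xlnx \<in> borel_measurable borel"
  unfolding xlnx_def by measurable
lemma sfun_meas[measurable]: "sfun \<in> borel_measurable borel"
  unfolding sfun_def by measurable
lemma Lf_meas[measurable]: "Lf \<in> borel_measurable borel"
  unfolding Lf_def by measurable

lemma fm_LI: "finite_measure LI"
  by (rule finite_measure_lebesgue_on) (simp add: lmeasurable_cbox[where a="-1" and b=1, simplified])

lemma int_bdd:
  fixes f :: "real \<Rightarrow> real"
  assumes "f \<in> borel_measurable LI" "\<And>x. x \<in> {-1..1} \<Longrightarrow> \<bar>f x\<bar> \<le> B"
  shows "integrable LI f"
  by (rule finite_measure.integrable_const_bound[OF fm_LI, where B=B]) (use assms in auto)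

lemma measure_LI: "-1 \<le> a \<Longrightarrow> a \<le> b \<Longrightarrow> b \<le> 1 \<Longrightarrow> measure LI {a..b} = b - a"
  by (subst measure_restrict_space) auto

lemma integral_const_LI: "integral\<^sup>L LI (\<lambda>x. c) = 2 * (c::real)"
  using measure_LI[of "-1" 1] by simp

lemma null_LI: "AE x in LI. x \<noteq> a"
proof (rule AE_I'[of "{a} \<inter> {-1..1}"])
  show "{a} \<inter> {-1..1} \<in> null_sets LI"
    by (subst null_sets_restrict_space) (auto simp: negligible_iff_null_sets[symmetric] intro: negligible_finite)
qed auto

lemma Mset_meas: "\<rho> \<in> Mset \<Longrightarrow> \<rho> \<in> borel_measurable LI"
  by (simp add: Mset_def)
lemma Mset_rng: "\<rho> \<in> Mset \<Longrightarrow> x \<in> {-1..1} \<Longrightarrow> 0 \<le> \<rho> x \<and> \<rho> x \<le> 1"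
  by (simp add: Mset_def)

lemma Fset_deriv:
  assumes "\<phi> \<in> Fset rm rp"
  obtains \<phi>' where "continuous_on {-1..1} \<phi>'"
    "\<And>x. x \<in> {-1..1} \<Longrightarrow> (\<phi> has_real_derivative \<phi>' x) (at x within {-1..1})"
    "\<And>x. x \<in> {-1..1} \<Longrightarrow> \<phi>' x > 0" "\<phi> (-1) = phi_b rm" "\<phi> 1 = phi_b rp"
  using assms unfolding Fset_def by blast

lemma Fset_cont: "\<phi> \<in> Fset rm rp \<Longrightarrow> continuous_on {-1..1} \<phi>"
proof -
  assume a: "\<phi> \<in> Fset rm rp"
  obtain \<phi>' where d: "\<And>x. x \<in> {-1..1} \<Longrightarrow> (\<phi> has_real_derivative \<phi>' x) (at x within {-1..1})"
    by (rule Fset_deriv[OF a]) blast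
  show ?thesis unfolding continuous_on_eq_continuous_within
    by (metis d has_derivative_continuous has_field_derivative_imp_has_derivative)
qed

lemma Fset_mono:
  assumes "\<phi> \<in> Fset rm rp" "-1 \<le> x" "x \<le> y" "y \<le> 1"
  shows "\<phi> x \<le> \<phi> y"
proof -
  obtain \<phi>' where d: "\<And>x. x \<in> {-1..1} \<Longrightarrow> (\<phi> has_real_derivative \<phi>' x) (at x within {-1..1})"
    and p: "\<And>x. x \<in> {-1..1} \<Longrightarrow> \<phi>' x > 0" by (rule Fset_deriv[OF assms(1)]) blast
  show ?thesis
  proof (rule DERIV_nonneg_imp_increasing_open[OF assms(3)])
    fix z assume z: "x < z" "z < y"
    hence "at z within {-1..1} = at z" using assms by (intro at_within_Icc_at) auto
    thus "\<exists>d. (\<phi> has_real_derivative d) (at z) \<and> 0 \<le> d"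
      using d[of z] p[of z] z assms by (intro exI[of _ "\<phi>' z"]) auto
  next
    show "continuous_on {x..y} \<phi>"
      using Fset_cont[OF assms(1)] by (rule continuous_on_subset) (use assms in auto)
  qed
qed

lemma Fset_rng:
  assumes "\<phi> \<in> Fset rm rp" "x \<in> {-1..1}"
  shows "phi_b rm \<le> \<phi> x \<and> \<phi> x \<le> phi_b rp"
proof -
  have "\<phi> (-1) = phi_b rm" "\<phi> 1 = phi_b rp" using assms(1) unfolding Fset_def by auto
  thus ?thesis using Fset_mono[OF assms(1), of "-1" x] Fset_mono[OF assms(1), of x 1] assms(2) by auto
qed

lemma Fset_ne:
  assumes "0 < rm" "rm < rp" "rp < 1"
  shows "(\<lambda>x. phi_b rm + (phi_b rp - phi_b rm) * ((x + 1) / 2)) \<in> Fset rm rp"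
proof -
  have "phi_b rm < phi_b rp" using phi_b_mono assms by blast
  thus ?thesis unfolding Fset_def
    by (intro CollectI conjI exI[of _ "\<lambda>x. (phi_b rp - phi_b rm) / 2"])
       (auto intro!: derivative_eq_intros)
qed

lemma HH_integrable:
  assumes "\<rho> \<in> Mset" "\<phi> \<in> Fset rm rp"
  shows "integrable LI (\<lambda>x. (1 - \<rho> x) * \<phi> x - ln (1 + exp (\<phi> x)))"
proof (rule int_bdd)
  have [measurable]: "\<rho> \<in> borel_measurable LI" using Mset_meas[OF assms(1)] .
  have [measurable]: "\<phi> \<in> borel_measurable LI"
    by (rule continuous_imp_measurable_on_sets_lebesgue[OF Fset_cont[OF assms(2)]]) auto
  show "(\<lambda>x. (1 - \<rho> x) * \<phi> x - ln (1 + exp (\<phi> x))) \<in> borel_measurable LI" by measurable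
  fix x :: real assume x: "x \<in> {-1..1}"
  have r: "0 \<le> \<rho> x" "\<rho> x \<le> 1" using Mset_rng[OF assms(1) x] by auto
  have f: "phi_b rm \<le> \<phi> x" "\<phi> x \<le> phi_b rp" using Fset_rng[OF assms(2) x] by auto
  have "\<bar>(1 - \<rho> x) * \<phi> x\<bar> \<le> 1 * (\<bar>phi_b rm\<bar> + \<bar>phi_b rp\<bar>)"
    unfolding abs_mult using r f by (intro mult_mono) auto
  moreover have "\<bar>ln (1 + exp (\<phi> x))\<bar> \<le> Lf (phi_b rp)"
    using Lf_pos[of "\<phi> x"] Lf_mono[OF f(2)] by (simp add: Lf_def)
  ultimately show "\<bar>(1 - \<rho> x) * \<phi> x - ln (1 + exp (\<phi> x))\<bar> \<le> (\<bar>phi_b rm\<bar> + \<bar>phi_b rp\<bar>) + Lf (phi_b rp)"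
    using abs_triangle_ineq4[of "(1 - \<rho> x) * \<phi> x" "ln (1 + exp (\<phi> x))"] by argo
qed

lemma SS_integrable:
  assumes "\<rho> \<in> Mset"
  shows "integrable LI (\<lambda>x. sfun (\<rho> x))"
proof (rule int_bdd)
  have [measurable]: "\<rho> \<in> borel_measurable LI" using Mset_meas[OF assms(1)] .
  show "(\<lambda>x. sfun (\<rho> x)) \<in> borel_measurable LI" by measurable
  fix x :: real assume x: "x \<in> {-1..1}"
  have "sfun (\<rho> x) \<le> 0" "- sfun (\<rho> x) \<le> ln 2" using Mset_rng[OF assms x] sfun_le0 sfun_ge by auto
  thus "\<bar>sfun (\<rho> x)\<bar> \<le> ln 2" by linarith
qed


definition Jf :: "real \<Rightarrow> real \<Rightarrow> (real \<Rightarrow> real) \<Rightarrow> real" where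
  "Jf rm rp \<rho> = Sup (HH \<rho> ` Fset rm rp)"

lemma Nlim: "filterlim (\<lambda>k::nat. real k + 1) at_top sequentially"
proof -
  have "filterlim (\<lambda>k::nat. 1 + real k) at_top sequentially"
    by (rule filterlim_tendsto_add_at_top[OF tendsto_const filterlim_real_sequentially])
  thus ?thesis by (simp add: add.commute)
qed

lemma arctan_lim:
  assumes x: "-1 \<le> x" "x \<le> 1" and z: "-1 \<le> z" "z \<le> 1" and ne: "x \<noteq> z \<or> x = 1 \<or> x = -1"
  shows "(\<lambda>k::nat. arctan ((real k + 1)^2 * (x - z) + (real k + 1) * z))
           \<longlonglongrightarrow> (if x > z \<or> x = 1 then pi/2 else - (pi/2))"
proof -
  let ?N = "\<lambda>k::nat. real k + 1"
  have eq: "\<And>k. (real k + 1)^2 * (x - z) + (real k + 1) * z = ?N k * (?N k * (x - z) + z)"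
    by (simp add: power2_eq_square algebra_simps)
  consider "x > z" | "x < z" | "x = z" "x = 1" | "x = z" "x = -1" using ne by linarith
  then show ?thesis
  proof cases
    case 1
    have "filterlim (\<lambda>k. ?N k * (x - z)) at_top sequentially"
      using filterlim_tendsto_pos_mult_at_top[OF tendsto_const[of "x - z"] _ Nlim] 1
      by (simp add: mult.commute)
    hence "filterlim (\<lambda>k. z + ?N k * (x - z)) at_top sequentially"
      by (rule filterlim_tendsto_add_at_top[OF tendsto_const])
    hence "filterlim (\<lambda>k. ?N k * (?N k * (x - z) + z)) at_top sequentially"
      by (intro filterlim_at_top_mult_at_top[OF Nlim]) (simp add: add.commute)
    hence "(\<lambda>k. arctan (?N k * (?N k * (x - z) + z))) \<longlonglongrightarrow> pi/2"
      by (rule filterlim_compose[OF tendsto_arctan_at_top])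
    thus ?thesis using 1 by (simp only: eq) simp
  next
    case 2
    have "filterlim (\<lambda>k. ?N k * (z - x)) at_top sequentially"
      using filterlim_tendsto_pos_mult_at_top[OF tendsto_const[of "z - x"] _ Nlim] 2
      by (simp add: mult.commute)
    hence "filterlim (\<lambda>k. - z + ?N k * (z - x)) at_top sequentially"
      by (rule filterlim_tendsto_add_at_top[OF tendsto_const])
    hence "filterlim (\<lambda>k. ?N k * (?N k * (z - x) - z)) at_top sequentially"
      by (intro filterlim_at_top_mult_at_top[OF Nlim]) (simp add: add.commute)
    hence "(\<lambda>k. arctan (?N k * (?N k * (z - x) - z))) \<longlonglongrightarrow> pi/2"
      by (rule filterlim_compose[OF tendsto_arctan_at_top])
    hence "(\<lambda>k. - arctan (?N k * (?N k * (z - x) - z))) \<longlonglongrightarrow> - (pi/2)"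
      by (rule tendsto_minus)
    moreover have "\<And>k. - arctan (?N k * (?N k * (z - x) - z)) = arctan (?N k * (?N k * (x - z) + z))"
      by (simp add: arctan_minus[symmetric] algebra_simps)
    ultimately have "(\<lambda>k. arctan (?N k * (?N k * (x - z) + z))) \<longlonglongrightarrow> - (pi/2)" by simp
    moreover have "\<not> (x > z \<or> x = 1)" using 2 z by auto
    ultimately show ?thesis by (simp only: eq if_False)
  next
    case 3
    have "(\<lambda>k. arctan (?N k)) \<longlonglongrightarrow> pi/2"
      by (rule filterlim_compose[OF tendsto_arctan_at_top Nlim])
    thus ?thesis using 3 by simp
  next
    case 4
    have "(\<lambda>k. arctan (?N k)) \<longlonglongrightarrow> pi/2"
      by (rule filterlim_compose[OF tendsto_arctan_at_top Nlim])
    hence "(\<lambda>k. - arctan (?N k)) \<longlonglongrightarrow> - (pi/2)" by (rule tendsto_minus)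
    moreover from 4 have zx: "z = -1" "x = -1" by auto
    ultimately have "(\<lambda>k. arctan (?N k * (?N k * (x - z) + z))) \<longlonglongrightarrow> - (pi/2)"
      unfolding zx by (simp add: arctan_minus[symmetric])
    moreover have "\<not> (x > z \<or> x = 1)" using 4 by auto
    ultimately show ?thesis by (simp only: eq if_False)
  qed
qed



lemma Fset_norm:
  fixes g g' :: "real \<Rightarrow> real"
  assumes p: "phi_b rm < phi_b rp"
    and d: "\<And>x. (g has_real_derivative g' x) (at x)" and c: "continuous_on UNIV g'"
    and pos: "\<And>x. g' x > 0"
  shows "(\<lambda>x. phi_b rm + (phi_b rp - phi_b rm) * ((g x - g (-1)) / (g 1 - g (-1)))) \<in> Fset rm rp"
proof -
  have gi: "g (-1) < g 1"
  proof (rule DERIV_pos_imp_increasing[of "-1" 1 g])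
    fix x show "\<exists>y. (g has_real_derivative y) (at x) \<and> 0 < y" using d pos by blast
  qed simp
  let ?D = "g 1 - g (-1)"
  have D: "?D > 0" using gi by simp
  show ?thesis unfolding Fset_def
  proof (intro CollectI conjI exI[of _ "\<lambda>x. (phi_b rp - phi_b rm) * (g' x / ?D)"] ballI)
    show "continuous_on {-1..1} (\<lambda>x. (phi_b rp - phi_b rm) * (g' x / ?D))"
      using gi by (intro continuous_intros continuous_on_subset[OF c]) auto
    fix x :: real
    show "((\<lambda>x. phi_b rm + (phi_b rp - phi_b rm) * ((g x - g (-1)) / ?D)) has_real_derivative
          (phi_b rp - phi_b rm) * (g' x / ?D)) (at x within {-1..1})"
    proof (rule has_field_derivative_at_within)
      have "((\<lambda>x. g x - g (-1)) has_real_derivative g' x - 0) (at x)"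
        by (rule DERIV_diff[OF d DERIV_const])
      hence "((\<lambda>x. (g x - g (-1)) / ?D) has_real_derivative (g' x - 0) / ?D) (at x)"
        by (rule DERIV_cdivide)
      hence "((\<lambda>x. (phi_b rp - phi_b rm) * ((g x - g (-1)) / ?D)) has_real_derivative (phi_b rp - phi_b rm) * ((g' x - 0) / ?D)) (at x)"
        by (rule DERIV_cmult)
      hence "((\<lambda>x. phi_b rm + (phi_b rp - phi_b rm) * ((g x - g (-1)) / ?D)) has_real_derivative 0 + (phi_b rp - phi_b rm) * ((g' x - 0) / ?D)) (at x)"
        by (rule DERIV_add[OF DERIV_const])
      thus "((\<lambda>x. phi_b rm + (phi_b rp - phi_b rm) * ((g x - g (-1)) / ?D)) has_real_derivative (phi_b rp - phi_b rm) * (g' x / ?D)) (at x)"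
        by simp
    qed
    show "(phi_b rp - phi_b rm) * (g' x / ?D) > 0" using p D pos[of x] by simp
  qed (use gi in auto)
qed



definition stepf :: "real \<Rightarrow> real \<Rightarrow> real \<Rightarrow> real \<Rightarrow> real \<Rightarrow> real \<Rightarrow> real" where
  "stepf p1 m p2 z1 z2 x = (if x < z1 then p1 else if x < z2 then m else p2)"

definition Gk :: "real \<Rightarrow> real \<Rightarrow> real \<Rightarrow> real \<Rightarrow> real \<Rightarrow> nat \<Rightarrow> real \<Rightarrow> real" where
  "Gk p1 m p2 z1 z2 k x = (m - p1) * arctan ((real k + 1)^2 * (x - z1) + (real k + 1) * z1)
      + (p2 - m) * arctan ((real k + 1)^2 * (x - z2) + (real k + 1) * z2)"

lemma arctan_aff_deriv:
  "((\<lambda>x. arctan (a*(x - z) + b*z)) has_real_derivative a / (1 + (a*(x-z) + b*z)^2)) (at x)"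
proof -
  have "((\<lambda>x. a*(x-z)+b*z) has_real_derivative a) (at x)"
    by (auto intro!: derivative_eq_intros)
  from DERIV_chain2[OF DERIV_arctan this] show ?thesis
    by (simp add: divide_inverse mult.commute)
qed

definition Gk' :: "real \<Rightarrow> real \<Rightarrow> real \<Rightarrow> real \<Rightarrow> real \<Rightarrow> nat \<Rightarrow> real \<Rightarrow> real" where
  "Gk' p1 m p2 z1 z2 k x = (m - p1) * ((real k + 1)^2 / (1 + ((real k + 1)^2 * (x - z1) + (real k + 1) * z1)^2))
   + (p2 - m) * ((real k + 1)^2 / (1 + ((real k + 1)^2 * (x - z2) + (real k + 1) * z2)^2))"

lemma Gk_deriv: "(Gk p1 m p2 z1 z2 k has_real_derivative Gk' p1 m p2 z1 z2 k x) (at x)"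
  unfolding Gk_def Gk'_def
  by (intro DERIV_add DERIV_cmult arctan_aff_deriv)

lemma one_plus_sq_pos: "0 < 1 + (w::real)^2"
  by (metis add_pos_nonneg zero_less_one zero_le_power2)

lemma Gk_fset:
  assumes p: "phi_b rm < phi_b rp" and m: "phi_b rm \<le> m" "m \<le> phi_b rp"
  shows "(\<lambda>x. phi_b rm + (phi_b rp - phi_b rm) * ((Gk (phi_b rm) m (phi_b rp) z1 z2 k x - Gk (phi_b rm) m (phi_b rp) z1 z2 k (-1))
     / (Gk (phi_b rm) m (phi_b rp) z1 z2 k 1 - Gk (phi_b rm) m (phi_b rp) z1 z2 k (-1)))) \<in> Fset rm rp"
proof (rule Fset_norm[OF p Gk_deriv])
  let ?n = "real k + 1"
  show "continuous_on UNIV (Gk' (phi_b rm) m (phi_b rp) z1 z2 k)"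
    unfolding Gk'_def by (intro continuous_intros) (metis one_plus_sq_pos less_irrefl)+
  fix x
  have n: "?n^2 > 0" by simp
  have a: "?n^2 / (1 + (?n^2 * (x - z1) + ?n * z1)^2) > 0" by (rule divide_pos_pos[OF n one_plus_sq_pos])
  have b: "?n^2 / (1 + (?n^2 * (x - z2) + ?n * z2)^2) > 0" by (rule divide_pos_pos[OF n one_plus_sq_pos])
  show "Gk' (phi_b rm) m (phi_b rp) z1 z2 k x > 0"
  proof (cases "m > phi_b rm")
    case True
    thus ?thesis unfolding Gk'_def using a b m by (intro add_pos_nonneg mult_pos_pos mult_nonneg_nonneg) auto
  next
    case False
    hence "phi_b rp - m > 0" using m p by auto
    thus ?thesis unfolding Gk'_def using a b m by (intro add_nonneg_pos mult_pos_pos mult_nonneg_nonneg) auto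
  qed
qed


definition Alim :: "real \<Rightarrow> real \<Rightarrow> real" where
  "Alim x z = (if x > z \<or> x = 1 then pi/2 else - (pi/2))"

lemma Gk_lim:
  assumes "-1 \<le> x" "x \<le> 1" "-1 \<le> z1" "z1 \<le> 1" "-1 \<le> z2" "z2 \<le> 1"
    "x \<noteq> z1 \<or> x = 1 \<or> x = -1" "x \<noteq> z2 \<or> x = 1 \<or> x = -1"
  shows "(\<lambda>k. Gk p1 m p2 z1 z2 k x) \<longlonglongrightarrow> (m - p1) * Alim x z1 + (p2 - m) * Alim x z2"
  unfolding Gk_def Alim_def
  by (intro tendsto_intros arctan_lim) (use assms in auto)

definition phik :: "real \<Rightarrow> real \<Rightarrow> real \<Rightarrow> real \<Rightarrow> real \<Rightarrow> nat \<Rightarrow> real \<Rightarrow> real" where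
  "phik p1 m p2 z1 z2 k x = p1 + (p2 - p1) * ((Gk p1 m p2 z1 z2 k x - Gk p1 m p2 z1 z2 k (-1))
     / (Gk p1 m p2 z1 z2 k 1 - Gk p1 m p2 z1 z2 k (-1)))"

lemma phik_lim:
  assumes p: "p1 < p2" and z: "-1 \<le> z1" "z1 \<le> z2" "z2 \<le> 1" and x: "-1 \<le> x" "x \<le> 1"
    and ne: "x \<noteq> z1" "x \<noteq> z2"
  shows "(\<lambda>k. phik p1 m p2 z1 z2 k x) \<longlonglongrightarrow> stepf p1 m p2 z1 z2 x"
proof -
  have l0: "(\<lambda>k. Gk p1 m p2 z1 z2 k x) \<longlonglongrightarrow> (m - p1) * Alim x z1 + (p2 - m) * Alim x z2"
    by (rule Gk_lim) (use z x ne in auto)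
  have l1: "(\<lambda>k. Gk p1 m p2 z1 z2 k (-1)) \<longlonglongrightarrow> (m - p1) * Alim (-1) z1 + (p2 - m) * Alim (-1) z2"
    by (rule Gk_lim) (use z in auto)
  have l2: "(\<lambda>k. Gk p1 m p2 z1 z2 k 1) \<longlonglongrightarrow> (m - p1) * Alim 1 z1 + (p2 - m) * Alim 1 z2"
    by (rule Gk_lim) (use z in auto)
  have a1: "Alim (-1) z = - (pi/2)" if "-1 \<le> z" for z using that by (auto simp: Alim_def)
  have a2: "Alim 1 z = pi/2" for z by (simp add: Alim_def)
  let ?G = "(m - p1) * Alim x z1 + (p2 - m) * Alim x z2"
  have den: "((m - p1) * Alim 1 z1 + (p2 - m) * Alim 1 z2) - ((m - p1) * Alim (-1) z1 + (p2 - m) * Alim (-1) z2)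
      = (p2 - p1) * pi" using z by (simp add: a1 a2 algebra_simps)
  have "(\<lambda>k. phik p1 m p2 z1 z2 k x) \<longlonglongrightarrow>
     p1 + (p2 - p1) * ((?G - ((m - p1) * Alim (-1) z1 + (p2 - m) * Alim (-1) z2)) / ((p2 - p1) * pi))"
    unfolding phik_def den[symmetric]
    by (intro tendsto_intros l0 l1 l2) (use den p in simp)
  also have "p1 + (p2 - p1) * ((?G - ((m - p1) * Alim (-1) z1 + (p2 - m) * Alim (-1) z2)) / ((p2 - p1) * pi))
      = stepf p1 m p2 z1 z2 x"
  proof -
    have pp: "p2 - p1 \<noteq> 0" using p by simp
    consider "x < z1" | "z1 < x" "x < z2" | "z2 < x" using ne z by linarith
    thus ?thesis
    proof cases
      case 1
      hence "Alim x z1 = - (pi/2)" "Alim x z2 = - (pi/2)" using z by (auto simp: Alim_def)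
      thus ?thesis using 1 z pp by (simp add: a1 stepf_def field_simps)
    next
      case 2
      hence "Alim x z1 = pi/2" "Alim x z2 = - (pi/2)" using z by (auto simp: Alim_def)
      thus ?thesis using 2 z pp by (simp add: a1 stepf_def field_simps)
    next
      case 3
      hence "Alim x z1 = pi/2" "Alim x z2 = pi/2" using z by (auto simp: Alim_def)
      thus ?thesis using 3 z pp by (simp add: a1 stepf_def field_simps)
    qed
  qed
  finally show ?thesis .
qed


lemma opexp[simp]: "1 + exp (y::real) \<noteq> 0" by (smt (verit) exp_gt_zero)

definition Cb :: "real \<Rightarrow> real \<Rightarrow> real" where
  "Cb rm rp = \<bar>phi_b rm\<bar> + \<bar>phi_b rp\<bar> + Lf (phi_b rp)"

lemma integrand_bound:
  assumes r: "0 \<le> r" "r \<le> 1" and t: "phi_b rm \<le> t" "t \<le> phi_b rp"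
  shows "\<bar>(1 - r) * t - ln (1 + exp t)\<bar> \<le> Cb rm rp"
proof -
  have "\<bar>(1 - r) * t\<bar> \<le> 1 * (\<bar>phi_b rm\<bar> + \<bar>phi_b rp\<bar>)"
    unfolding abs_mult using r t by (intro mult_mono) auto
  moreover have "\<bar>ln (1 + exp t)\<bar> \<le> Lf (phi_b rp)"
    using Lf_pos[of t] Lf_mono[OF t(2)] by (simp add: Lf_def)
  ultimately show ?thesis unfolding Cb_def
    using abs_triangle_ineq4[of "(1 - r) * t" "ln (1 + exp t)"] by argo
qed

lemma HH_abs_le:
  assumes "\<rho> \<in> Mset" "\<phi> \<in> Fset rm rp"
  shows "HH \<rho> \<phi> \<le> Cb rm rp"
proof -
  have "integral\<^sup>L LI (\<lambda>x. (1 - \<rho> x) * \<phi> x - ln (1 + exp (\<phi> x))) \<le> integral\<^sup>L LI (\<lambda>x. Cb rm rp)"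
  proof (rule integral_mono[OF HH_integrable[OF assms]])
    fix x assume "x \<in> space LI"
    hence x: "x \<in> {-1..1}" by simp
    show "(1 - \<rho> x) * \<phi> x - ln (1 + exp (\<phi> x)) \<le> Cb rm rp"
      using integrand_bound[of "\<rho> x" rm "\<phi> x" rp] Mset_rng[OF assms(1) x] Fset_rng[OF assms(2) x] by auto
  qed simp
  thus ?thesis unfolding HH_def integral_const_LI by simp
qed

lemma HH_bdd: "\<rho> \<in> Mset \<Longrightarrow> bdd_above (HH \<rho> ` Fset rm rp)"
  using HH_abs_le by (intro bdd_aboveI2) blast

lemma Fset_ne': "0 < rm \<Longrightarrow> rm < rp \<Longrightarrow> rp < 1 \<Longrightarrow> Fset rm rp \<noteq> {}"
  using Fset_ne by blast

lemma HH_le_J: "0 < rm \<Longrightarrow> rm < rp \<Longrightarrow> rp < 1 \<Longrightarrow> \<rho> \<in> Mset \<Longrightarrow> \<phi> \<in> Fset rm rp \<Longrightarrow> HH \<rho> \<phi> \<le> Jf rm rp \<rho>"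
  unfolding Jf_def by (intro cSup_upper HH_bdd) auto

lemma J_le:
  assumes "0 < rm" "rm < rp" "rp < 1" "\<And>\<phi>. \<phi> \<in> Fset rm rp \<Longrightarrow> HH \<rho> \<phi> \<le> X"
  shows "Jf rm rp \<rho> \<le> X"
  unfolding Jf_def using assms Fset_ne'[OF assms(1-3)] by (intro cSup_least) auto

lemma HH_le_int:
  assumes "\<rho> \<in> Mset" "\<phi> \<in> Fset rm rp" "integrable LI g"
    "\<And>x t. x \<in> {-1..1} \<Longrightarrow> phi_b rm \<le> t \<Longrightarrow> t \<le> phi_b rp \<Longrightarrow> (1 - \<rho> x) * t - Lf t \<le> g x"
  shows "HH \<rho> \<phi> \<le> (1/2) * integral\<^sup>L LI g"
proof -
  have "integral\<^sup>L LI (\<lambda>x. (1 - \<rho> x) * \<phi> x - ln (1 + exp (\<phi> x))) \<le> integral\<^sup>L LI g"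
  proof (rule integral_mono[OF HH_integrable[OF assms(1,2)] assms(3)])
    fix x assume "x \<in> space LI"
    hence x: "x \<in> {-1..1}" by simp
    show "(1 - \<rho> x) * \<phi> x - ln (1 + exp (\<phi> x)) \<le> g x"
      using assms(4)[OF x, of "\<phi> x"] Fset_rng[OF assms(2) x] by (simp add: Lf_def)
  qed
  thus ?thesis unfolding HH_def by simp
qed

lemma stepf_meas[measurable]: "stepf p1 m p2 z1 z2 \<in> borel_measurable borel"
  unfolding stepf_def by measurable

lemma J_ge_step:
  assumes r: "0 < rm" "rm < rp" "rp < 1" and \<rho>: "\<rho> \<in> Mset"
    and z: "-1 \<le> z1" "z1 \<le> z2" "z2 \<le> 1" and m: "phi_b rm \<le> m" "m \<le> phi_b rp"
  shows "(1/2) * integral\<^sup>L LI (\<lambda>x. (1 - \<rho> x) * stepf (phi_b rm) m (phi_b rp) z1 z2 x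
            - Lf (stepf (phi_b rm) m (phi_b rp) z1 z2 x)) \<le> Jf rm rp \<rho>"
proof -
  let ?p1 = "phi_b rm" and ?p2 = "phi_b rp"
  have p: "?p1 < ?p2" using phi_b_mono r by blast
  let ?T = "stepf ?p1 m ?p2 z1 z2"
  let ?f = "\<lambda>k x. (1 - \<rho> x) * phik ?p1 m ?p2 z1 z2 k x - ln (1 + exp (phik ?p1 m ?p2 z1 z2 k x))"
  let ?g = "\<lambda>x. (1 - \<rho> x) * ?T x - Lf (?T x)"
  have F: "phik ?p1 m ?p2 z1 z2 k \<in> Fset rm rp" for k
    unfolding phik_def by (rule Gk_fset[OF p m])
  have [measurable]: "\<rho> \<in> borel_measurable LI" using Mset_meas[OF \<rho>] .
  have id: "(\<lambda>x::real. x) \<in> borel_measurable LI"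
    by (rule continuous_imp_measurable_on_sets_lebesgue) (auto intro: continuous_intros)
  have [measurable]: "?T \<in> borel_measurable LI" using measurable_compose[OF id stepf_meas] by simp
  have "(\<lambda>k. integral\<^sup>L LI (?f k)) \<longlonglongrightarrow> integral\<^sup>L LI ?g"
  proof (rule integral_dominated_convergence[where w = "\<lambda>_. Cb rm rp"])
    show "?g \<in> borel_measurable LI" by measurable
    show "?f k \<in> borel_measurable LI" for k using HH_integrable[OF \<rho> F] by blast
    show "integrable LI (\<lambda>_. Cb rm rp)" by simp
    have "AE x in LI. x \<noteq> z1 \<and> x \<noteq> z2 \<and> x \<in> {-1..1}"
      using null_LI[of z1] null_LI[of z2] AE_space[of LI] by eventually_elim auto
    thus "AE x in LI. (\<lambda>k. ?f k x) \<longlonglongrightarrow> ?g x"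
    proof eventually_elim
      case (elim x)
      have "(\<lambda>k. phik ?p1 m ?p2 z1 z2 k x) \<longlonglongrightarrow> ?T x"
        by (rule phik_lim) (use p z elim in auto)
      thus ?case unfolding Lf_def by (intro tendsto_intros) auto
    qed
    fix k
    show "AE x in LI. norm (?f k x) \<le> Cb rm rp"
    proof (rule AE_I2)
      fix x assume "x \<in> space LI"
      hence x: "x \<in> {-1..1}" by simp
      show "norm (?f k x) \<le> Cb rm rp"
        using integrand_bound[of "\<rho> x" rm "phik ?p1 m ?p2 z1 z2 k x" rp] Mset_rng[OF \<rho> x] Fset_rng[OF F x]
        by auto
    qed
  qed
  hence "(\<lambda>k. HH \<rho> (phik ?p1 m ?p2 z1 z2 k)) \<longlonglongrightarrow> (1/2) * integral\<^sup>L LI ?g"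
    unfolding HH_def by (intro tendsto_intros)
  thus ?thesis
    by (rule LIMSEQ_le_const2) (use HH_le_J[OF r \<rho> F] in auto)
qed


lemma sfun_cont: "0 < rm \<Longrightarrow> rp < 1 \<Longrightarrow> continuous_on {rm..rp} sfun"
proof -
  assume a: "0 < rm" "rp < 1"
  have "continuous_on {rm..rp} (\<lambda>u. u * ln u + (1-u) * ln (1-u))"
    using a by (intro continuous_intros) auto
  thus ?thesis by (rule continuous_on_cong[THEN iffD1, rotated 2]) (use a in \<open>auto simp: sfun_open\<close>)
qed

context
  fixes rm rp :: real
  assumes r: "0 < rm" "rm < rp" "rp < 1"
begin

lemma m0M0_bounds: "u \<in> {rm..rp} \<Longrightarrow> m0 rm rp \<le> - sfun u \<and> - sfun u \<le> M0 rm rp"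
proof -
  assume u: "u \<in> {rm..rp}"
  have c: "continuous_on {rm..rp} (\<lambda>u. - sfun u)" using sfun_cont r by (intro continuous_intros) auto
  have "compact ((\<lambda>u. - sfun u) ` {rm..rp})" by (rule compact_continuous_image[OF c]) simp
  hence b: "bounded ((\<lambda>u. - sfun u) ` {rm..rp})" by (rule compact_imp_bounded)
  show ?thesis unfolding m0_def M0_def using u
    by (intro conjI cInf_lower cSup_upper bounded_imp_bdd_below bounded_imp_bdd_above b) auto
qed

lemma m0_attained: "\<exists>u\<in>{rm..rp}. - sfun u = m0 rm rp"
proof -
  have c: "continuous_on {rm..rp} (\<lambda>u. - sfun u)" using sfun_cont r by (intro continuous_intros) auto
  obtain u where u: "u \<in> {rm..rp}" "\<And>y. y \<in> {rm..rp} \<Longrightarrow> - sfun u \<le> - sfun y"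
    using continuous_attains_inf[OF _ _ c] r by fastforce
  have "m0 rm rp = - sfun u" unfolding m0_def by (rule cInf_eq_minimum) (use u in auto)
  thus ?thesis using u by auto
qed

lemma M0_attained: "\<exists>u\<in>{rm..rp}. - sfun u = M0 rm rp"
proof -
  have c: "continuous_on {rm..rp} (\<lambda>u. - sfun u)" using sfun_cont r by (intro continuous_intros) auto
  obtain u where u: "u \<in> {rm..rp}" "\<And>y. y \<in> {rm..rp} \<Longrightarrow> - sfun y \<le> - sfun u"
    using continuous_attains_sup[OF _ _ c] r by fastforce
  have "M0 rm rp = - sfun u" unfolding M0_def by (rule cSup_eq_maximum) (use u in auto)
  thus ?thesis using u by auto
qed

lemma M0_le: "M0 rm rp \<le> ln 2"
proof -
  obtain u where "u \<in> {rm..rp}" "- sfun u = M0 rm rp" using M0_attained by blast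
  thus ?thesis using sfun_ge[of u] r by auto
qed

lemma m0_le_M0: "m0 rm rp \<le> M0 rm rp"
  using m0M0_bounds[of rm] r by auto

lemma M0_half: "rm \<le> 1/2 \<Longrightarrow> 1/2 \<le> rp \<Longrightarrow> M0 rm rp = ln 2"
  using m0M0_bounds[of "1/2"] M0_le sfun_half by auto

lemma middle_value:
  assumes "- M0 rm rp \<le> y" "y \<le> - m0 rm rp"
  shows "\<exists>w\<in>{rm..rp}. sfun w = y"
proof -
  obtain u1 where u1: "u1 \<in> {rm..rp}" "- sfun u1 = m0 rm rp" using m0_attained by blast
  obtain u2 where u2: "u2 \<in> {rm..rp}" "- sfun u2 = M0 rm rp" using M0_attained by blast
  have "y \<in> closed_segment (sfun u1) (sfun u2)"
    using assms u1 u2 by (auto simp: closed_segment_eq_real_ivl)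
  moreover have "closed_segment u1 u2 \<subseteq> {rm..rp}"
    using u1 u2 by (auto simp: closed_segment_eq_real_ivl)
  moreover have "continuous_on (closed_segment u1 u2) sfun"
    by (rule continuous_on_subset[OF sfun_cont]) (use r calculation(2) in auto)
  ultimately show ?thesis using IVT'_closed_segment_real[of _ sfun u1 u2] by blast
qed

end

lemma step_meas[measurable]:
  "(\<lambda>x::real. if x < z1 then c1 else if x < z2 then c2 else (c3::real)) \<in> borel_measurable LI"
proof -
  have id: "(\<lambda>x::real. x) \<in> borel_measurable LI"
    by (rule continuous_imp_measurable_on_sets_lebesgue) (auto intro: continuous_intros)
  have "(\<lambda>x::real. if x < z1 then c1 else if x < z2 then c2 else (c3::real)) \<in> borel_measurable borel"
    by measurable
  from measurable_compose[OF id this] show ?thesis by simp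
qed

lemma integral_step:
  assumes z: "-1 \<le> z1" "z1 \<le> z2" "z2 \<le> 1"
  shows "integral\<^sup>L LI (\<lambda>x. if x < z1 then c1 else if x < z2 then c2 else (c3::real))
     = (z1 + 1) * c1 + (z2 - z1) * c2 + (1 - z2) * c3"
proof -
  let ?f = "\<lambda>x. c1 * indicator {-1..z1} x + c2 * indicator {z1..z2} x + c3 * indicator {z2..1} x"
  have [measurable]: "{-1..z1} \<in> sets LI" "{z1..z2} \<in> sets LI" "{z2..1} \<in> sets LI"
    using z by (auto simp: sets_restrict_space_iff)
  have int: "integrable LI (indicator {a..b} :: real \<Rightarrow> real)" if "-1 \<le> a" "a \<le> b" "b \<le> 1" for a b
    using that by (intro integrable_real_indicator) (auto simp: sets_restrict_space_iff emeasure_restrict_space)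
  have "AE x in LI. (if x < z1 then c1 else if x < z2 then c2 else c3) = ?f x"
    using null_LI[of z1] null_LI[of z2] AE_space[of LI]
    by eventually_elim (use z in \<open>auto simp: indicator_def\<close>)
  hence "integral\<^sup>L LI (\<lambda>x. if x < z1 then c1 else if x < z2 then c2 else (c3::real)) = integral\<^sup>L LI ?f"
    by (intro integral_cong_AE) auto
  also have "\<dots> = c1 * measure LI {-1..z1} + c2 * measure LI {z1..z2} + c3 * measure LI {z2..1}"
    using int[of "-1" z1] int[of z1 z2] int[of z2 1] z by simp
  also have "\<dots> = (z1 + 1) * c1 + (z2 - z1) * c2 + (1 - z2) * c3"
    using z by (simp add: measure_LI algebra_simps)
  finally show ?thesis .
qed


definition Kc :: "real \<Rightarrow> real \<Rightarrow> real \<Rightarrow> (real \<times> real \<times> real \<times> real) set" where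
  "Kc rm rp e = {(xm, xp, ym, yp).
      0 \<le> ym \<and> ym \<le> rm \<and> rm < rp \<and> rp \<le> yp \<and> yp \<le> 1 \<and>
      -1 \<le> xm \<and> xm \<le> xp \<and> xp \<le> 1 \<and>
      (1/2) * ((xm + 1) * (gamma (phi_b rm) ym + m0 rm rp) + (1 - xp) * (gamma (phi_b rp) yp + m0 rm rp))
        \<ge> e + m0 rm rp \<and>
      (1/2) * ((xm + 1) * (gamma (phi_b rm) ym + M0 rm rp) + (1 - xp) * (gamma (phi_b rp) yp + M0 rm rp))
        \<le> e + M0 rm rp}"

lemma Kset_Kc: "Kset rm rp E = Kc rm rp (E + Vbar rm rp)"
  by (simp add: Kset_def Kc_def)

lemma Ffun_eq: "Ffun rm rp (xm, xp, ym, yp) =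
   (1/2) * ((xm + 1) * (- sfun ym + gamma (phi_b rm) ym) + (1 - xp) * (- sfun yp + gamma (phi_b rp) yp))"
  by (simp add: Ffun_def)

lemma phi_b_mono_le: "0 < a \<Longrightarrow> a \<le> b \<Longrightarrow> b < 1 \<Longrightarrow> phi_b a \<le> phi_b b"
  using phi_b_mono[of a b] by (cases "a = b") auto

lemma step_int_bdd:
  "integrable LI (\<lambda>x::real. if x < z1 then c1 else if x < z2 then c2 else (c3::real))"
  by (rule int_bdd[where B = "\<bar>c1\<bar> + \<bar>c2\<bar> + \<bar>c3\<bar>"]) (auto intro: step_meas)

lemma construct:
  assumes r: "0 < rm" "rm < rp" "rp < 1" and k: "(xm, xp, ym, yp) \<in> Kc rm rp e"
  shows "\<exists>\<rho>\<in>Mset. Jf rm rp \<rho> = e \<and> SS \<rho> = Ffun rm rp (xm, xp, ym, yp) - e"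
proof -
  let ?p1 = "phi_b rm" and ?p2 = "phi_b rp"
  define g1 where "g1 = gamma ?p1 ym"
  define g2 where "g2 = gamma ?p2 yp"
  define D where "D = e - (1/2) * (xm + 1) * g1 - (1/2) * (1 - xp) * g2"
  have kk: "0 \<le> ym" "ym \<le> rm" "rp \<le> yp" "yp \<le> 1" "-1 \<le> xm" "xm \<le> xp" "xp \<le> 1"
    and C1: "(1/2) * ((xm + 1) * (g1 + m0 rm rp) + (1 - xp) * (g2 + m0 rm rp)) \<ge> e + m0 rm rp"
    and C2: "(1/2) * ((xm + 1) * (g1 + M0 rm rp) + (1 - xp) * (g2 + M0 rm rp)) \<le> e + M0 rm rp"
    using k unfolding Kc_def g1_def g2_def by auto
  have D1: "D \<le> - (1/2) * (xp - xm) * m0 rm rp" using C1 unfolding D_def by (simp add: field_simps)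
  have D2: "D \<ge> - (1/2) * (xp - xm) * M0 rm rp" using C2 unfolding D_def by (simp add: field_simps)
  obtain w where w: "w \<in> {rm..rp}" "(1/2) * (xp - xm) * sfun w = D"
  proof (cases "xp = xm")
    case True
    hence "D = 0" using D1 D2 by simp
    thus ?thesis using that[of rm] True r by auto
  next
    case False
    hence c: "xp - xm > 0" using kk by simp
    have "- M0 rm rp \<le> 2 * D / (xp - xm)" "2 * D / (xp - xm) \<le> - m0 rm rp"
      using D1 D2 c by (simp_all add: field_simps)
    then obtain w where "w \<in> {rm..rp}" "sfun w = 2 * D / (xp - xm)"
      using middle_value[OF r] by blast
    thus ?thesis using that[of w] c by (simp add: field_simps)
  qed
  have w01: "0 < w" "w < 1" using w r by auto
  define u where "u x = (if x < xm then ym else if x < xp then w else yp)" for x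
  define \<rho> where "\<rho> x = 1 - u x" for x
  have u01: "0 \<le> u x \<and> u x \<le> 1" for x using kk w r unfolding u_def by auto
  have [measurable]: "u \<in> borel_measurable LI" unfolding u_def[abs_def] by (rule step_meas)
  have \<rho>M: "\<rho> \<in> Mset" unfolding Mset_def \<rho>_def[abs_def] using u01 by auto
  have pw: "phi_b rm \<le> phi_b w" "phi_b w \<le> phi_b rp" using w r by (auto intro!: phi_b_mono_le)
  define T where "T = stepf ?p1 (phi_b w) ?p2 xm xp"
  have sw: "w * phi_b w - Lf (phi_b w) = sfun w" using legendre_eq[OF w01] by (simp add: phi_b_def)
  have integrand: "(1 - \<rho> x) * T x - Lf (T x) = (if x < xm then g1 else if x < xp then sfun w else g2)" for x
    unfolding \<rho>_def u_def T_def stepf_def g1_def g2_def using sw by (simp add: gamma_Lf)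
  have intval: "(1/2) * integral\<^sup>L LI (\<lambda>x. if x < xm then g1 else if x < xp then sfun w else g2) = e"
    using integral_step[of xm xp g1 "sfun w" g2] kk w(2) unfolding D_def by (simp add: algebra_simps; argo)
  have J1: "e \<le> Jf rm rp \<rho>"
    using J_ge_step[OF r \<rho>M kk(5,6,7) pw] unfolding T_def[symmetric] integrand intval .
  have J2: "Jf rm rp \<rho> \<le> e"
  proof (rule J_le[OF r])
    fix \<phi> assume \<phi>: "\<phi> \<in> Fset rm rp"
    have "HH \<rho> \<phi> \<le> (1/2) * integral\<^sup>L LI (\<lambda>x. if x < xm then g1 else if x < xp then sfun w else g2)"
    proof (rule HH_le_int[OF \<rho>M \<phi> step_int_bdd])
      fix x t assume x: "x \<in> {-1..(1::real)}" and t: "?p1 \<le> t" "t \<le> ?p2"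
      show "(1 - \<rho> x) * t - Lf t \<le> (if x < xm then g1 else if x < xp then sfun w else g2)"
        unfolding \<rho>_def u_def g1_def g2_def
        using tangent_left[of rm ym t] tangent_right[of rp yp t] legendre[of w t] r kk t w01 by auto
    qed
    thus "HH \<rho> \<phi> \<le> e" using intval by simp
  qed
  have SSv: "SS \<rho> = - (1/2) * ((xm + 1) * sfun ym + (xp - xm) * sfun w + (1 - xp) * sfun yp)"
  proof -
    have "(\<lambda>x. sfun (\<rho> x)) = (\<lambda>x. if x < xm then sfun ym else if x < xp then sfun w else sfun yp)"
      unfolding \<rho>_def u_def by (auto simp: sfun_sym)
    thus ?thesis unfolding SS_def using integral_step[of xm xp "sfun ym" "sfun w" "sfun yp"] kk by simp
  qed
  have "SS \<rho> = Ffun rm rp (xm, xp, ym, yp) - e"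
    unfolding SSv Ffun_eq using w(2) unfolding D_def g1_def g2_def by (simp add: algebra_simps; argo)
  thus ?thesis using \<rho>M J1 J2 by auto
qed


lemma sfun_abs: "0 \<le> u \<Longrightarrow> u \<le> 1 \<Longrightarrow> \<bar>sfun u\<bar> \<le> ln 2"
  using sfun_le0[of u] sfun_ge[of u] by linarith

lemma zone:
  assumes r: "0 < rm" "rm < rp" "rp < 1" and \<rho>M: "\<rho> \<in> Mset"
  shows "\<exists>k e'. k \<in> Kc rm rp e' \<and> Jf rm rp \<rho> \<le> e' \<and> SS \<rho> \<le> Ffun rm rp k - e'"
proof -
  let ?p1 = "phi_b rm" and ?p2 = "phi_b rp"
  have [measurable]: "\<rho> \<in> borel_measurable LI" using Mset_meas[OF \<rho>M] .
  define u where "u x = 1 - \<rho> x" for x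
  have [measurable]: "u \<in> borel_measurable LI" unfolding u_def[abs_def] by measurable
  have u01: "0 \<le> u x" "u x \<le> 1" if "x \<in> {-1..1}" for x using Mset_rng[OF \<rho>M that] unfolding u_def by auto
  define iA where "iA x = (if u x < rm then 1 else (0::real))" for x
  define iB where "iB x = (if u x > rp then 1 else (0::real))" for x
  define iC where "iC x = 1 - iA x - iB x" for x
  have [measurable]: "iA \<in> borel_measurable LI" unfolding iA_def[abs_def] by measurable
  have [measurable]: "iB \<in> borel_measurable LI" unfolding iB_def[abs_def] by measurable
  have [measurable]: "iC \<in> borel_measurable LI" unfolding iC_def[abs_def] by measurable
  have iAB: "0 \<le> iA x" "iA x \<le> 1" "0 \<le> iB x" "iB x \<le> 1" "0 \<le> iC x" "iC x \<le> 1" for x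
    using r unfolding iA_def iB_def iC_def by auto
  have intI: "integrable LI f" if "f \<in> borel_measurable LI" "\<And>x. x \<in> {-1..1} \<Longrightarrow> \<bar>f x\<bar> \<le> B" for f :: "real \<Rightarrow> real" and B :: real
    by (rule int_bdd[OF that])
  have iA_int: "integrable LI iA" by (rule intI[where B=1]) (use iAB in auto)
  have iB_int: "integrable LI iB" by (rule intI[where B=1]) (use iAB in auto)
  have iAu_int: "integrable LI (\<lambda>x. iA x * u x)"
    by (rule intI[where B=1]) (use iAB u01 in \<open>auto simp: abs_mult intro!: mult_le_one\<close>)
  have iBu_int: "integrable LI (\<lambda>x. iB x * u x)"
    by (rule intI[where B=1]) (use iAB u01 in \<open>auto simp: abs_mult intro!: mult_le_one\<close>)
  have sint: "integrable LI (\<lambda>x. i x * sfun (u x))" if "i \<in> borel_measurable LI" "\<And>x. 0 \<le> i x \<and> i x \<le> 1" for i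
  proof (rule intI[where B="ln 2"])
    show "(\<lambda>x. i x * sfun (u x)) \<in> borel_measurable LI" using that(1) by measurable
    fix x assume x: "x \<in> {-1..(1::real)}"
    have "\<bar>i x\<bar> * \<bar>sfun (u x)\<bar> \<le> 1 * ln 2"
      using that(2)[of x] sfun_abs[OF u01[OF x]] by (intro mult_mono) auto
    thus "\<bar>i x * sfun (u x)\<bar> \<le> ln 2" by (simp add: abs_mult)
  qed
  have iAs_int: "integrable LI (\<lambda>x. iA x * sfun (u x))" by (rule sint) (use iAB in auto)
  have iBs_int: "integrable LI (\<lambda>x. iB x * sfun (u x))" by (rule sint) (use iAB in auto)
  have iCs_int: "integrable LI (\<lambda>x. iC x * sfun (u x))" by (rule sint) (use iAB in auto)
  define a where "a = integral\<^sup>L LI iA"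
  define b where "b = integral\<^sup>L LI iB"
  define Ya where "Ya = integral\<^sup>L LI (\<lambda>x. iA x * u x)"
  define Yb where "Yb = integral\<^sup>L LI (\<lambda>x. iB x * u x)"
  define Dm where "Dm = (1/2) * integral\<^sup>L LI (\<lambda>x. iC x * sfun (u x))"
  have a0: "0 \<le> a" unfolding a_def by (rule Bochner_Integration.integral_nonneg) (use iAB in auto)
  have b0: "0 \<le> b" unfolding b_def by (rule Bochner_Integration.integral_nonneg) (use iAB in auto)
  have iC_int: "integral\<^sup>L LI iC = 2 - a - b"
  proof -
    have "integral\<^sup>L LI iC = integral\<^sup>L LI (\<lambda>x. 1 - iA x - iB x)" unfolding iC_def by simp
    also have "\<dots> = integral\<^sup>L LI (\<lambda>x. 1::real) - a - b"
      unfolding a_def b_def using iA_int iB_int by simp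
    finally show ?thesis using measure_LI[of "-1" 1] by simp
  qed
  have ab2: "a + b \<le> 2"
  proof -
    have "0 \<le> integral\<^sup>L LI iC" by (rule Bochner_Integration.integral_nonneg) (use iAB in auto)
    thus ?thesis using iC_int by simp
  qed
  have Ya_b: "0 \<le> Ya" "Ya \<le> rm * a"
  proof -
    show "0 \<le> Ya" unfolding Ya_def by (rule Bochner_Integration.integral_nonneg) (use iAB u01 in auto)
    have "Ya \<le> integral\<^sup>L LI (\<lambda>x. rm * iA x)" unfolding Ya_def
    proof (rule integral_mono[OF iAu_int])
      show "integrable LI (\<lambda>x. rm * iA x)" using iA_int by simp
      fix x show "iA x * u x \<le> rm * iA x" by (auto simp: iA_def)
    qed
    thus "Ya \<le> rm * a" unfolding a_def by simp
  qed
  have Yb_b: "rp * b \<le> Yb" "Yb \<le> b"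
  proof -
    have "integral\<^sup>L LI (\<lambda>x. rp * iB x) \<le> Yb" unfolding Yb_def
    proof (rule integral_mono[OF _ iBu_int])
      show "integrable LI (\<lambda>x. rp * iB x)" using iB_int by simp
      fix x show "rp * iB x \<le> iB x * u x" by (auto simp: iB_def)
    qed
    thus "rp * b \<le> Yb" unfolding b_def by simp
    show "Yb \<le> b" unfolding Yb_def b_def
    proof (rule integral_mono[OF iBu_int iB_int])
      fix x assume "x \<in> space LI" thus "iB x * u x \<le> iB x" using u01[of x] by (auto simp: iB_def)
    qed
  qed
  define ym where "ym = (if a = 0 then 0 else Ya / a)"
  define yp where "yp = (if b = 0 then 1 else Yb / b)"
  have Ya_eq: "Ya = a * ym"
  proof (cases "a = 0")
    case True thus ?thesis using Ya_b by (simp add: ym_def)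
  qed (simp add: ym_def)
  have Yb_eq: "Yb = b * yp"
  proof (cases "b = 0")
    case True thus ?thesis using Yb_b by (simp add: yp_def)
  qed (simp add: yp_def)
  have ym_b: "0 \<le> ym \<and> ym \<le> rm"
  proof (cases "a = 0")
    case True thus ?thesis using r by (simp add: ym_def)
  next
    case False hence "a > 0" using a0 by simp
    thus ?thesis using Ya_b by (simp add: ym_def pos_divide_le_eq)
  qed
  have yp_b: "rp \<le> yp \<and> yp \<le> 1"
  proof (cases "b = 0")
    case True thus ?thesis using r by (simp add: yp_def)
  next
    case False hence "b > 0" using b0 by simp
    thus ?thesis using Yb_b by (simp add: yp_def pos_le_divide_eq pos_divide_le_eq)
  qed
  have Dm_b: "Dm \<le> - (1/2) * (m0 rm rp * (2 - a - b))" "- (1/2) * (M0 rm rp * (2 - a - b)) \<le> Dm"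
  proof -
    have "integral\<^sup>L LI (\<lambda>x. iC x * sfun (u x)) \<le> integral\<^sup>L LI (\<lambda>x. - m0 rm rp * iC x)"
    proof (rule integral_mono[OF iCs_int])
      show "integrable LI (\<lambda>x. - m0 rm rp * iC x)" using iA_int iB_int unfolding iC_def by auto
      fix x assume "x \<in> space LI"
      hence x: "x \<in> {-1..1}" by simp
      show "iC x * sfun (u x) \<le> - m0 rm rp * iC x"
        using m0M0_bounds[OF r, of "u x"] r unfolding iC_def iA_def iB_def by auto
    qed
    moreover have "integral\<^sup>L LI (\<lambda>x. - m0 rm rp * iC x) = - (m0 rm rp * (2 - a - b))" using iC_int by simp
    ultimately show "Dm \<le> - (1/2) * (m0 rm rp * (2 - a - b))" unfolding Dm_def by linarith
    have "integral\<^sup>L LI (\<lambda>x. - M0 rm rp * iC x) \<le> integral\<^sup>L LI (\<lambda>x. iC x * sfun (u x))"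
    proof (rule integral_mono[OF _ iCs_int])
      show "integrable LI (\<lambda>x. - M0 rm rp * iC x)" using iA_int iB_int unfolding iC_def by auto
      fix x assume "x \<in> space LI"
      hence x: "x \<in> {-1..1}" by simp
      show "- M0 rm rp * iC x \<le> iC x * sfun (u x)"
        using m0M0_bounds[OF r, of "u x"] r unfolding iC_def iA_def iB_def by auto
    qed
    moreover have "integral\<^sup>L LI (\<lambda>x. - M0 rm rp * iC x) = - (M0 rm rp * (2 - a - b))" using iC_int by simp
    ultimately show "- (1/2) * (M0 rm rp * (2 - a - b)) \<le> Dm" unfolding Dm_def by linarith
  qed
  define e' where "e' = (1/2) * a * gamma ?p1 ym + (1/2) * b * gamma ?p2 yp + Dm"
  define k where "k = (a - 1, 1 - b, ym, yp)"
  have kK: "k \<in> Kc rm rp e'"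
    unfolding k_def Kc_def e'_def using ym_b yp_b a0 b0 ab2 r Dm_b
    by (auto simp: algebra_simps; argo)
  define g where "g x = iA x * gamma ?p1 (u x) + iB x * gamma ?p2 (u x) + iC x * sfun (u x)" for x
  have g_alt: "g x = ?p1 * (iA x * u x) - Lf ?p1 * iA x + (?p2 * (iB x * u x) - Lf ?p2 * iB x) + iC x * sfun (u x)" for x
    unfolding g_def by (simp add: gamma_Lf algebra_simps)
  have g_int: "integrable LI g" unfolding g_alt[abs_def]
    using iA_int iB_int iAu_int iBu_int iCs_int by auto
  have g_val: "(1/2) * integral\<^sup>L LI g = e'"
  proof -
    have "integral\<^sup>L LI g = ?p1 * Ya - Lf ?p1 * a + (?p2 * Yb - Lf ?p2 * b) + 2 * Dm"
      unfolding g_alt[abs_def] Ya_def a_def Yb_def b_def Dm_def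
      using iA_int iB_int iAu_int iBu_int iCs_int by simp
    thus ?thesis unfolding e'_def Ya_eq Yb_eq by (simp add: gamma_Lf algebra_simps)
  qed
  have J: "Jf rm rp \<rho> \<le> e'"
  proof (rule J_le[OF r])
    fix \<phi> assume \<phi>: "\<phi> \<in> Fset rm rp"
    have "HH \<rho> \<phi> \<le> (1/2) * integral\<^sup>L LI g"
    proof (rule HH_le_int[OF \<rho>M \<phi> g_int])
      fix x t assume x: "x \<in> {-1..(1::real)}" and t: "?p1 \<le> t" "t \<le> ?p2"
      show "(1 - \<rho> x) * t - Lf t \<le> g x"
        unfolding g_def iC_def iA_def iB_def u_def[symmetric]
        using tangent_left[of rm "u x" t] tangent_right[of rp "u x" t] legendre[of "u x" t] r t u01[OF x]
        by auto
    qed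
    thus "HH \<rho> \<phi> \<le> e'" using g_val by simp
  qed
  have SSa: "integral\<^sup>L LI (\<lambda>x. iA x * (- sfun (u x))) \<le> a * (- sfun ym)"
  proof (rule inf_lemma[OF a0 conjunct1[OF ym_b]])
    show "ym \<le> 1" using ym_b r by simp
    fix t
    have "integral\<^sup>L LI (\<lambda>x. iA x * (- sfun (u x))) \<le> integral\<^sup>L LI (\<lambda>x. Lf t * iA x - t * (iA x * u x))"
    proof (rule integral_mono)
      show "integrable LI (\<lambda>x. iA x * (- sfun (u x)))" using iAs_int by simp
      show "integrable LI (\<lambda>x. Lf t * iA x - t * (iA x * u x))" using iA_int iAu_int by simp
      fix x assume "x \<in> space LI"
      hence x: "x \<in> {-1..1}" by simp
      show "iA x * (- sfun (u x)) \<le> Lf t * iA x - t * (iA x * u x)"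
        using legendre[of "u x" t] u01[OF x] unfolding iA_def by (auto simp: mult.commute)
    qed
    also have "\<dots> = a * (Lf t - ym * t)"
      using iA_int iAu_int Ya_eq unfolding a_def Ya_def by (simp add: algebra_simps)
    finally show "integral\<^sup>L LI (\<lambda>x. iA x * (- sfun (u x))) \<le> a * (Lf t - ym * t)" .
  qed
  have SSb: "integral\<^sup>L LI (\<lambda>x. iB x * (- sfun (u x))) \<le> b * (- sfun yp)"
  proof (rule inf_lemma[OF b0 _ conjunct2[OF yp_b]])
    show "0 \<le> yp" using yp_b r by simp
    fix t
    have "integral\<^sup>L LI (\<lambda>x. iB x * (- sfun (u x))) \<le> integral\<^sup>L LI (\<lambda>x. Lf t * iB x - t * (iB x * u x))"
    proof (rule integral_mono)
      show "integrable LI (\<lambda>x. iB x * (- sfun (u x)))" using iBs_int by simp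
      show "integrable LI (\<lambda>x. Lf t * iB x - t * (iB x * u x))" using iB_int iBu_int by simp
      fix x assume "x \<in> space LI"
      hence x: "x \<in> {-1..1}" by simp
      show "iB x * (- sfun (u x)) \<le> Lf t * iB x - t * (iB x * u x)"
        using legendre[of "u x" t] u01[OF x] unfolding iB_def by (auto simp: mult.commute)
    qed
    also have "\<dots> = b * (Lf t - yp * t)"
      using iB_int iBu_int Yb_eq unfolding b_def Yb_def by (simp add: algebra_simps)
    finally show "integral\<^sup>L LI (\<lambda>x. iB x * (- sfun (u x))) \<le> b * (Lf t - yp * t)" .
  qed
  have SSeq: "SS \<rho> = (1/2) * integral\<^sup>L LI (\<lambda>x. iA x * (- sfun (u x))) + (1/2) * integral\<^sup>L LI (\<lambda>x. iB x * (- sfun (u x))) - Dm"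
  proof -
    have "(\<lambda>x. sfun (\<rho> x)) = (\<lambda>x. iA x * sfun (u x) + iB x * sfun (u x) + iC x * sfun (u x))"
      unfolding iC_def u_def by (auto simp: sfun_sym algebra_simps)
    hence "integral\<^sup>L LI (\<lambda>x. sfun (\<rho> x)) = integral\<^sup>L LI (\<lambda>x. iA x * sfun (u x)) + integral\<^sup>L LI (\<lambda>x. iB x * sfun (u x))
        + integral\<^sup>L LI (\<lambda>x. iC x * sfun (u x))"
      using iAs_int iBs_int iCs_int by simp
    thus ?thesis unfolding SS_def Dm_def by (simp; argo)
  qed
  have "SS \<rho> \<le> Ffun rm rp k - e'"
    unfolding SSeq k_def Ffun_eq e'_def using SSa SSb by (simp add: algebra_simps; argo)
  thus ?thesis using kK J by blast
qed


lemma measure_LI_all[simp]: "measure LI {-1..1} = 2"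
  using measure_LI[of "-1" 1] by simp

definition c0 :: "real \<Rightarrow> real \<Rightarrow> real" where
  "c0 rm rp = (if rp < 1/2 then phi_b rp else if 1/2 < rm then phi_b rm else 0)"
definition epk :: "real \<Rightarrow> real \<Rightarrow> real" where
  "epk rm rp = c0 rm rp / 2 - Lf (c0 rm rp)"
definition hmin :: "real \<Rightarrow> real \<Rightarrow> real" where
  "hmin rm rp = min (c0 rm rp) 0 - Lf (c0 rm rp)"
definition hmax :: "real \<Rightarrow> real \<Rightarrow> real" where
  "hmax rm rp = max (- Lf (phi_b rm)) (phi_b rp - Lf (phi_b rp))"

definition ubar :: "(real \<Rightarrow> real) \<Rightarrow> real" where
  "ubar \<rho> = (1/2) * integral\<^sup>L LI (\<lambda>x. 1 - \<rho> x)"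

context
  fixes rm rp :: real
  assumes r: "0 < rm" "rm < rp" "rp < 1"
begin

lemma c0_rng: "phi_b rm \<le> c0 rm rp \<and> c0 rm rp \<le> phi_b rp"
proof -
  have "phi_b rm \<le> phi_b rp" using phi_b_mono r by (simp add: less_imp_le)
  moreover have "rm \<le> 1/2 \<Longrightarrow> phi_b rm \<le> 0" using phi_b_mono_le[of rm "1/2"] r phi_b_half by simp
  moreover have "1/2 \<le> rp \<Longrightarrow> 0 \<le> phi_b rp" using phi_b_mono_le[of "1/2" rp] r phi_b_half by simp
  ultimately show ?thesis unfolding c0_def by auto
qed

lemma ubar_rng: "\<rho> \<in> Mset \<Longrightarrow> 0 \<le> ubar \<rho> \<and> ubar \<rho> \<le> 1"
proof -
  assume \<rho>: "\<rho> \<in> Mset"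
  have [measurable]: "\<rho> \<in> borel_measurable LI" using Mset_meas[OF \<rho>] .
  have int: "integrable LI (\<lambda>x. 1 - \<rho> x)"
    by (rule int_bdd[where B=1]) (use Mset_rng[OF \<rho>] in auto)
  have "0 \<le> integral\<^sup>L LI (\<lambda>x. 1 - \<rho> x)"
    by (rule Bochner_Integration.integral_nonneg) (use Mset_rng[OF \<rho>] in auto)
  moreover have "integral\<^sup>L LI (\<lambda>x. 1 - \<rho> x) \<le> integral\<^sup>L LI (\<lambda>x. 1::real)"
    by (rule integral_mono[OF int]) (use Mset_rng[OF \<rho>] in auto)
  ultimately show ?thesis unfolding ubar_def integral_const_LI by simp
qed

lemma J_ge_const:
  assumes \<rho>: "\<rho> \<in> Mset" and c: "phi_b rm \<le> c" "c \<le> phi_b rp"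
  shows "ubar \<rho> * c - Lf c \<le> Jf rm rp \<rho>"
proof -
  have [measurable]: "\<rho> \<in> borel_measurable LI" using Mset_meas[OF \<rho>] .
  have id: "(\<lambda>x::real. x) \<in> borel_measurable LI"
    by (rule continuous_imp_measurable_on_sets_lebesgue) (auto intro: continuous_intros)
  let ?T = "stepf (phi_b rm) c (phi_b rp) (-1) 1"
  have [measurable]: "?T \<in> borel_measurable LI" using measurable_compose[OF id stepf_meas] by simp
  have int: "integrable LI (\<lambda>x. 1 - \<rho> x)"
    by (rule int_bdd[where B=1]) (use Mset_rng[OF \<rho>] in auto)
  have "integral\<^sup>L LI (\<lambda>x. (1 - \<rho> x) * ?T x - Lf (?T x)) = integral\<^sup>L LI (\<lambda>x. c * (1 - \<rho> x) - Lf c)"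
  proof (rule integral_cong_AE)
    show "(\<lambda>x. (1 - \<rho> x) * ?T x - Lf (?T x)) \<in> borel_measurable LI" by measurable
    show "(\<lambda>x. c * (1 - \<rho> x) - Lf c) \<in> borel_measurable LI" by measurable
    show "AE x in LI. (1 - \<rho> x) * ?T x - Lf (?T x) = c * (1 - \<rho> x) - Lf c"
      using null_LI[of 1] AE_space[of LI] by eventually_elim (auto simp: stepf_def)
  qed
  also have "\<dots> = c * integral\<^sup>L LI (\<lambda>x. 1 - \<rho> x) - 2 * Lf c"
    using int by (simp add: integral_const_LI)
  finally have "(1/2) * integral\<^sup>L LI (\<lambda>x. (1 - \<rho> x) * ?T x - Lf (?T x)) = ubar \<rho> * c - Lf c"
    unfolding ubar_def by simp
  with J_ge_step[OF r \<rho> _ _ _ c, of "-1" 1] show ?thesis by simp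
qed

lemma SS_jensen:
  assumes \<rho>: "\<rho> \<in> Mset"
  shows "SS \<rho> \<le> - sfun (ubar \<rho>)"
proof -
  have [measurable]: "\<rho> \<in> borel_measurable LI" using Mset_meas[OF \<rho>] .
  have int: "integrable LI (\<lambda>x. 1 - \<rho> x)"
    by (rule int_bdd[where B=1]) (use Mset_rng[OF \<rho>] in auto)
  have "SS \<rho> \<le> 1 * (- sfun (ubar \<rho>))"
  proof (rule inf_lemma)
    show "0 \<le> ubar \<rho>" "ubar \<rho> \<le> 1" using ubar_rng[OF \<rho>] by auto
    fix t
    have "integral\<^sup>L LI (\<lambda>x. - sfun (\<rho> x)) \<le> integral\<^sup>L LI (\<lambda>x. Lf t - t * (1 - \<rho> x))"
    proof (rule integral_mono)
      show "integrable LI (\<lambda>x. - sfun (\<rho> x))" using SS_integrable[OF \<rho>] by simp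
      show "integrable LI (\<lambda>x. Lf t - t * (1 - \<rho> x))" using int by simp
      fix x assume "x \<in> space LI"
      hence x: "x \<in> {-1..1}" by simp
      show "- sfun (\<rho> x) \<le> Lf t - t * (1 - \<rho> x)"
        using legendre[of "1 - \<rho> x" t] Mset_rng[OF \<rho> x] sfun_sym[of "\<rho> x"] by (auto simp: mult.commute)
    qed
    also have "\<dots> = 2 * Lf t - t * integral\<^sup>L LI (\<lambda>x. 1 - \<rho> x)" using int by (simp add: integral_const_LI)
    finally show "SS \<rho> \<le> 1 * (Lf t - ubar \<rho> * t)" unfolding SS_def ubar_def using SS_integrable[OF \<rho>] by (simp add: mult.commute; linarith?)
  qed simp
  thus ?thesis by simp
qed

lemma J_le_hmax:
  assumes \<rho>: "\<rho> \<in> Mset"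
  shows "Jf rm rp \<rho> \<le> hmax rm rp"
proof (rule J_le[OF r])
  fix \<phi> assume \<phi>: "\<phi> \<in> Fset rm rp"
  have "HH \<rho> \<phi> \<le> (1/2) * integral\<^sup>L LI (\<lambda>x. hmax rm rp)"
  proof (rule HH_le_int[OF \<rho> \<phi>])
    show "integrable LI (\<lambda>x. hmax rm rp)" by simp
    fix x t assume x: "x \<in> {-1..(1::real)}" and t: "phi_b rm \<le> t" "t \<le> phi_b rp"
    have u: "0 \<le> 1 - \<rho> x" "1 - \<rho> x \<le> 1" using Mset_rng[OF \<rho> x] by auto
    have "(1 - \<rho> x) * t - Lf t \<le> max (t - Lf t) (- Lf t)"
    proof (cases "t \<ge> 0")
      case True thus ?thesis using u mult_left_le_one_le[of t "1 - \<rho> x"] by auto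
    next
      case False
      hence "(1 - \<rho> x) * t \<le> 0" using u by (simp add: mult_nonneg_nonpos)
      thus ?thesis by auto
    qed
    also have "\<dots> \<le> hmax rm rp"
    proof -
      have "t - Lf t = - Lf (- t)" using Lf_minus[of t] by simp
      also have "\<dots> \<le> - Lf (- phi_b rp)" using Lf_mono[of "- phi_b rp" "- t"] t by simp
      also have "\<dots> = phi_b rp - Lf (phi_b rp)" using Lf_minus[of "phi_b rp"] by simp
      finally have "t - Lf t \<le> phi_b rp - Lf (phi_b rp)" .
      moreover have "- Lf t \<le> - Lf (phi_b rm)" using Lf_mono[OF t(1)] by simp
      ultimately show ?thesis unfolding hmax_def by auto
    qed
    finally show "(1 - \<rho> x) * t - Lf t \<le> hmax rm rp" .
  qed
  thus "HH \<rho> \<phi> \<le> hmax rm rp" by (simp add: integral_const_LI)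
qed

lemma J_ge_hmin:
  assumes \<rho>: "\<rho> \<in> Mset"
  shows "hmin rm rp \<le> Jf rm rp \<rho>"
proof -
  have "ubar \<rho> * c0 rm rp - Lf (c0 rm rp) \<le> Jf rm rp \<rho>"
    using J_ge_const[OF \<rho>] c0_rng by auto
  moreover have "min (c0 rm rp) 0 \<le> ubar \<rho> * c0 rm rp"
    using ubar_rng[OF \<rho>] by (cases "c0 rm rp \<ge> 0") (auto simp: mult_left_le_one_le mult_le_cancel_right1)
  ultimately show ?thesis unfolding hmin_def by linarith
qed

end


lemma KcI:
  assumes "0 \<le> ym" "ym \<le> rm" "rm < rp" "rp \<le> yp" "yp \<le> 1" "-1 \<le> xm" "xm \<le> xp" "xp \<le> 1"
    "(1/2) * ((xm + 1) * (gamma (phi_b rm) ym + m0 rm rp) + (1 - xp) * (gamma (phi_b rp) yp + m0 rm rp)) \<ge> e + m0 rm rp"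
    "(1/2) * ((xm + 1) * (gamma (phi_b rm) ym + M0 rm rp) + (1 - xp) * (gamma (phi_b rp) yp + M0 rm rp)) \<le> e + M0 rm rp"
  shows "(xm, xp, ym, yp) \<in> Kc rm rp e"
  using assms unfolding Kc_def by auto

lemma KcD:
  assumes "(xm, xp, ym, yp) \<in> Kc rm rp e"
  shows "0 \<le> ym" "ym \<le> rm" "rm < rp" "rp \<le> yp" "yp \<le> 1" "-1 \<le> xm" "xm \<le> xp" "xp \<le> 1"
    "(1/2) * ((xm + 1) * (gamma (phi_b rm) ym + m0 rm rp) + (1 - xp) * (gamma (phi_b rp) yp + m0 rm rp)) \<ge> e + m0 rm rp"
    "(1/2) * ((xm + 1) * (gamma (phi_b rm) ym + M0 rm rp) + (1 - xp) * (gamma (phi_b rp) yp + M0 rm rp)) \<le> e + M0 rm rp"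
  using assms unfolding Kc_def by auto

context
  fixes rm rp :: real
  assumes r: "0 < rm" "rm < rp" "rp < 1"
begin

lemma FB:
  assumes k: "(xm, xp, ym, yp) \<in> Kc rm rp e"
  shows "Ffun rm rp (xm, xp, ym, yp) - e \<le> ln 2"
proof -
  note kd = KcD[OF k]
  have a: "0 \<le> xm + 1" "0 \<le> 1 - xp" "0 \<le> 2 - (xm + 1) - (1 - xp)" using kd by auto
  have s1: "(xm + 1) * (- sfun ym) \<le> (xm + 1) * ln 2"
    using sfun_ge[of ym] kd r by (intro mult_left_mono) auto
  have s2: "(1 - xp) * (- sfun yp) \<le> (1 - xp) * ln 2"
    using sfun_ge[of yp] kd r by (intro mult_left_mono) auto
  have s3: "(2 - (xm + 1) - (1 - xp)) * M0 rm rp \<le> (2 - (xm + 1) - (1 - xp)) * ln 2"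
    using M0_le[OF r] a by (intro mult_left_mono) auto
  show ?thesis using kd(10) s1 s2 s3 unfolding Ffun_eq by (simp add: algebra_simps; argo)
qed

lemma K_hmax: "Kc rm rp (hmax rm rp) \<noteq> {}"
proof (cases "- Lf (phi_b rm) \<ge> phi_b rp - Lf (phi_b rp)")
  case True
  hence h: "hmax rm rp = - Lf (phi_b rm)" unfolding hmax_def by auto
  have "(1, 1, 0, rp) \<in> Kc rm rp (hmax rm rp)" by (rule KcI) (use r h in \<open>auto simp: gamma_Lf\<close>)
  thus ?thesis by blast
next
  case False
  hence h: "hmax rm rp = phi_b rp - Lf (phi_b rp)" unfolding hmax_def by auto
  have "(-1, -1, 0, 1) \<in> Kc rm rp (hmax rm rp)" by (rule KcI) (use r h in \<open>auto simp: gamma_Lf\<close>)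
  thus ?thesis by blast
qed

definition Glow :: "real \<Rightarrow> real" where
  "Glow e = (if rp < 1/2 then - sfun ((e + Lf (phi_b rp)) / phi_b rp)
     else if 1/2 < rm then - sfun ((e + Lf (phi_b rm)) / phi_b rm) else ln 2)"

lemma sfun_tangent_cmp:
  assumes v: "0 < v" "v < 1" and u: "0 \<le> u" "u \<le> 1" and le: "(v - u) * phi_b v \<le> 0"
  shows "- sfun u \<le> - sfun v"
proof -
  have "u * phi_b v - Lf (phi_b v) \<le> sfun u" using legendre[OF u] .
  moreover have "v * phi_b v - Lf (phi_b v) = sfun v" using legendre_eq[OF v] by (simp add: phi_b_def)
  ultimately show ?thesis using le by (simp add: algebra_simps)
qed

lemma SS_low:
  assumes \<rho>: "\<rho> \<in> Mset" and J: "Jf rm rp \<rho> = e" and e: "e \<le> epk rm rp"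
  shows "SS \<rho> \<le> Glow e"
proof -
  have SSj: "SS \<rho> \<le> - sfun (ubar \<rho>)" by (rule SS_jensen[OF r \<rho>])
  have u: "0 \<le> ubar \<rho>" "ubar \<rho> \<le> 1" using ubar_rng[OF r \<rho>] by auto
  have Jc: "ubar \<rho> * c0 rm rp - Lf (c0 rm rp) \<le> e" using J_ge_const[OF r \<rho>] c0_rng[OF r] J by auto
  consider "rp < 1/2" | "\<not> rp < 1/2" "1/2 < rm" | "rm \<le> 1/2" "1/2 \<le> rp" by linarith
  thus ?thesis
  proof cases
    case 1
    let ?p = "phi_b rp"
    have p: "?p < 0" using phi_b_neg r 1 by auto
    have c: "c0 rm rp = ?p" using 1 by (simp add: c0_def)
    define v where "v = (e + Lf ?p) / ?p"
    have vp: "v * ?p = e + Lf ?p" unfolding v_def using p by simp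
    have uv: "v \<le> ubar \<rho>"
    proof -
      have "ubar \<rho> * ?p \<le> v * ?p" using Jc c vp by simp
      thus ?thesis using p by (simp add: mult_le_cancel_right)
    qed
    have v2: "1/2 \<le> v"
    proof -
      have "v * ?p \<le> (1/2) * ?p" using e vp c unfolding epk_def by simp
      thus ?thesis using p by (simp add: mult_le_cancel_right)
    qed
    have "- sfun (ubar \<rho>) \<le> - sfun v"
    proof (cases "v = ubar \<rho>")
      case False
      hence v1: "v < 1" using uv u by simp
      have "0 \<le> phi_b v" using phi_b_mono_le[of "1/2" v] v1 v2 phi_b_half by simp
      moreover have "v - ubar \<rho> \<le> 0" using uv by simp
      ultimately show ?thesis using v1 v2 u by (intro sfun_tangent_cmp) (auto simp: mult_nonpos_nonneg)
    qed simp
    thus ?thesis using SSj 1 unfolding Glow_def v_def by simp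
  next
    case 2
    let ?p = "phi_b rm"
    have p: "?p > 0" using phi_b_pos r 2 by auto
    have c: "c0 rm rp = ?p" using 2 by (simp add: c0_def)
    define v where "v = (e + Lf ?p) / ?p"
    have vp: "v * ?p = e + Lf ?p" unfolding v_def using p by simp
    have uv: "ubar \<rho> \<le> v"
    proof -
      have "ubar \<rho> * ?p \<le> v * ?p" using Jc c vp by simp
      thus ?thesis using p by (simp add: mult_le_cancel_right)
    qed
    have v2: "v \<le> 1/2"
    proof -
      have "v * ?p \<le> (1/2) * ?p" using e vp c unfolding epk_def by simp
      thus ?thesis using p by (simp add: mult_le_cancel_right)
    qed
    have "- sfun (ubar \<rho>) \<le> - sfun v"
    proof (cases "v = ubar \<rho>")
      case False
      hence v0: "0 < v" using uv u by simp
      have "phi_b v \<le> 0" using phi_b_mono_le[of v "1/2"] v0 v2 phi_b_half by simp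
      moreover have "0 \<le> v - ubar \<rho>" using uv by simp
      ultimately show ?thesis using v0 v2 u by (intro sfun_tangent_cmp) (auto simp: mult_nonneg_nonpos)
    qed simp
    thus ?thesis using SSj 2 unfolding Glow_def v_def by simp
  next
    case 3
    have "SS \<rho> \<le> ln 2" using SSj sfun_ge[of "ubar \<rho>"] u by simp
    thus ?thesis using 3 unfolding Glow_def by simp
  qed
qed

lemma K_low:
  assumes e: "hmin rm rp \<le> e" "e \<le> epk rm rp"
  shows "\<exists>k\<in>Kc rm rp e. Ffun rm rp k - e = Glow e"
proof -
  consider "rp < 1/2" | "\<not> rp < 1/2" "1/2 < rm" | "rm \<le> 1/2" "1/2 \<le> rp" by linarith
  thus ?thesis
  proof cases
    case 1
    let ?p = "phi_b rp"
    have p: "?p < 0" using phi_b_neg r 1 by auto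
    have c: "c0 rm rp = ?p" using 1 by (simp add: c0_def)
    define v where "v = (e + Lf ?p) / ?p"
    have vp: "v * ?p = e + Lf ?p" unfolding v_def using p by simp
    have v2: "1/2 \<le> v"
    proof -
      have "v * ?p \<le> (1/2) * ?p" using e vp c unfolding epk_def by simp
      thus ?thesis using p by (simp add: mult_le_cancel_right)
    qed
    have v1: "v \<le> 1"
    proof -
      have "1 * ?p \<le> v * ?p" using e vp c p unfolding hmin_def by simp
      thus ?thesis using p by (simp add: mult_le_cancel_right)
    qed
    have g: "gamma ?p v = e" using vp by (simp add: gamma_Lf)
    have "(-1, -1, 0, v) \<in> Kc rm rp e" by (rule KcI) (use r v1 v2 1 g in auto)
    moreover have "Ffun rm rp (-1, -1, 0, v) - e = Glow e"
      unfolding Ffun_eq Glow_def v_def[symmetric] using 1 g by (simp add: field_simps)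
    ultimately show ?thesis by blast
  next
    case 2
    let ?p = "phi_b rm"
    have p: "?p > 0" using phi_b_pos r 2 by auto
    have c: "c0 rm rp = ?p" using 2 by (simp add: c0_def)
    define v where "v = (e + Lf ?p) / ?p"
    have vp: "v * ?p = e + Lf ?p" unfolding v_def using p by simp
    have v2: "v \<le> 1/2"
    proof -
      have "v * ?p \<le> (1/2) * ?p" using e vp c unfolding epk_def by simp
      thus ?thesis using p by (simp add: mult_le_cancel_right)
    qed
    have v0: "0 \<le> v"
    proof -
      have "0 * ?p \<le> v * ?p" using e vp c p unfolding hmin_def by simp
      thus ?thesis using p by (simp add: zero_le_mult_iff)
    qed
    have g: "gamma ?p v = e" using vp by (simp add: gamma_Lf)
    have "(1, 1, v, rp) \<in> Kc rm rp e" by (rule KcI) (use r v0 v2 2 g in auto)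
    moreover have "Ffun rm rp (1, 1, v, rp) - e = Glow e"
      unfolding Ffun_eq Glow_def v_def[symmetric] using 2 g by (simp add: field_simps)
    ultimately show ?thesis by blast
  next
    case 3
    have c: "c0 rm rp = 0" using 3 by (simp add: c0_def)
    have ee: "e = - ln 2" using e c unfolding hmin_def epk_def by (simp add: Lf_0)
    have "(-1, 1, 0, 1) \<in> Kc rm rp e"
      by (rule KcI) (use r ee M0_half[OF r 3] m0_le_M0[OF r] in auto)
    moreover have "Ffun rm rp (-1, 1, 0, 1) - e = Glow e"
      unfolding Ffun_eq Glow_def using 3 ee by simp
    ultimately show ?thesis by blast
  qed
qed

lemma epk_le_hmax: "epk rm rp \<le> hmax rm rp"
proof -
  have L: "Lf (phi_b rm) \<le> Lf (phi_b rp)" using Lf_mono phi_b_mono r by (simp add: less_imp_le)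
  consider "rp < 1/2" | "\<not> rp < 1/2" "1/2 < rm" | "rm \<le> 1/2" "1/2 \<le> rp" by linarith
  thus ?thesis
  proof cases
    case 1
    have "phi_b rp < 0" using phi_b_neg r 1 by auto
    thus ?thesis using 1 L unfolding epk_def c0_def hmax_def by auto
  next
    case 2
    have p: "phi_b rm > 0" using phi_b_pos r 2 by auto
    have "- Lf (- phi_b rm) \<le> - Lf (- phi_b rp)" using Lf_mono[of "- phi_b rp" "- phi_b rm"] less_imp_le[OF phi_b_mono[OF r]] by simp
    hence "phi_b rm - Lf (phi_b rm) \<le> phi_b rp - Lf (phi_b rp)" using Lf_minus[of "phi_b rm"] Lf_minus[of "phi_b rp"] by simp
    thus ?thesis using 2 p unfolding epk_def c0_def hmax_def by auto
  next
    case 3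
    have "phi_b rm \<le> 0" using phi_b_mono_le[of rm "1/2"] r 3 phi_b_half by simp
    hence "Lf (phi_b rm) \<le> Lf 0" by (rule Lf_mono)
    thus ?thesis using 3 unfolding epk_def c0_def hmax_def by (auto simp: Lf_0)
  qed
qed

lemma hmin_le_epk: "hmin rm rp \<le> epk rm rp"
proof -
  consider "rp < 1/2" | "\<not> rp < 1/2" "1/2 < rm" | "rm \<le> 1/2" "1/2 \<le> rp" by linarith
  thus ?thesis
  proof cases
    case 1
    have "phi_b rp < 0" using phi_b_neg r 1 by auto
    thus ?thesis using 1 unfolding epk_def c0_def hmin_def by auto
  next
    case 2
    have p: "phi_b rm > 0" using phi_b_pos r 2 by auto
    thus ?thesis using 2 unfolding epk_def c0_def hmin_def by auto
  qed (auto simp: epk_def c0_def hmin_def)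
qed

end


context
  fixes rm rp :: real
  assumes r: "0 < rm" "rm < rp" "rp < 1"
begin

lemma mix_mid:
  assumes k2: "(xm, xp, ym, yp) \<in> Kc rm rp e2" and t: "0 \<le> t" "t \<le> 1"
    and e1: "e1 = (1 - t) * e2 - t * ln 2" and M: "M0 rm rp = ln 2"
  shows "\<exists>k1\<in>Kc rm rp e1. Ffun rm rp (xm, xp, ym, yp) - e2 \<le> Ffun rm rp k1 - e1"
proof -
  note kd = KcD[OF k2]
  let ?A = "gamma (phi_b rm) ym" and ?B = "gamma (phi_b rp) yp" and ?m = "m0 rm rp" and ?M = "M0 rm rp"
  let ?L1 = "(1/2) * ((xm + 1) * (?A + ?m) + (1 - xp) * (?B + ?m))"
  let ?L2 = "(1/2) * ((xm + 1) * (?A + ?M) + (1 - xp) * (?B + ?M))"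
  let ?xm = "(1 - t) * (xm + 1) - 1" and ?xp = "1 - (1 - t) * (1 - xp)"
  have t1: "0 \<le> 1 - t" using t by simp
  have c1: "(1 - t) * (e2 + ?m) \<le> (1 - t) * ?L1" by (rule mult_left_mono[OF kd(9) t1])
  have c2: "(1 - t) * ?L2 \<le> (1 - t) * (e2 + ?M)" by (rule mult_left_mono[OF kd(10) t1])
  have mm: "t * ?m \<le> t * ln 2" using m0_le_M0[OF r] M t by (intro mult_left_mono) auto
  have "(?xm, ?xp, ym, yp) \<in> Kc rm rp e1"
  proof (rule KcI)
    show "0 \<le> ym" "ym \<le> rm" "rm < rp" "rp \<le> yp" "yp \<le> 1" using kd by auto
    show "-1 \<le> ?xm" using kd t1 by simp
    show "?xp \<le> 1" using kd t1 by simp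
    have "(1 - t) * ((xm + 1) + (1 - xp)) \<le> 1 * 2" using kd t by (intro mult_mono) auto
    thus "?xm \<le> ?xp" by (simp add: field_simps; argo?)
    have "(1/2) * ((?xm + 1) * (?A + ?m) + (1 - ?xp) * (?B + ?m)) = (1 - t) * ?L1"
      by (simp add: field_simps; argo?)
    thus "e1 + ?m \<le> (1/2) * ((?xm + 1) * (?A + ?m) + (1 - ?xp) * (?B + ?m))"
      using c1 mm unfolding e1 by (simp add: field_simps; argo?)
    have "(1/2) * ((?xm + 1) * (?A + ?M) + (1 - ?xp) * (?B + ?M)) = (1 - t) * ?L2"
      by (simp add: field_simps; argo?)
    thus "(1/2) * ((?xm + 1) * (?A + ?M) + (1 - ?xp) * (?B + ?M)) \<le> e1 + ?M"
      using c2 M unfolding e1 by (simp add: field_simps; argo?)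
  qed
  moreover have "Ffun rm rp (xm, xp, ym, yp) - e2 \<le> Ffun rm rp (?xm, ?xp, ym, yp) - e1"
  proof -
    have F1: "Ffun rm rp (?xm, ?xp, ym, yp) = (1 - t) * Ffun rm rp (xm, xp, ym, yp)"
      unfolding Ffun_eq by (simp add: field_simps; argo?)
    have "t * (Ffun rm rp (xm, xp, ym, yp) - e2) \<le> t * ln 2" using FB[OF r k2] t by (intro mult_left_mono) auto
    thus ?thesis unfolding F1 e1 by (simp add: field_simps; argo?)
  qed
  ultimately show ?thesis by blast
qed

lemma mix_right:
  assumes k2: "(xm, xp, ym, yp) \<in> Kc rm rp e2" and t: "0 < t" "t \<le> 1" and rh: "rp \<le> 1/2"
    and e1: "e1 = (1 - t) * e2 + t * gamma (phi_b rp) (1/2)"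
  shows "\<exists>k1\<in>Kc rm rp e1. Ffun rm rp (xm, xp, ym, yp) - e2 \<le> Ffun rm rp k1 - e1"
proof -
  note kd = KcD[OF k2]
  let ?p = "phi_b rp"
  let ?A = "gamma (phi_b rm) ym" and ?B = "gamma ?p yp" and ?m = "m0 rm rp" and ?M = "M0 rm rp"
  let ?L1 = "(1/2) * ((xm + 1) * (?A + ?m) + (1 - xp) * (?B + ?m))"
  let ?L2 = "(1/2) * ((xm + 1) * (?A + ?M) + (1 - xp) * (?B + ?M))"
  define b' where "b' = (1 - t) * (1 - xp) + 2 * t"
  define yp' where "yp' = ((1 - t) * (1 - xp) * yp + t) / b'"
  let ?xm = "(1 - t) * (xm + 1) - 1" and ?xp = "1 - b'"
  have t1: "0 \<le> 1 - t" using t by simp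
  have b0: "0 < b'" unfolding b'_def using kd t by (simp add: add_nonneg_pos)
  have byp: "b' * yp' = (1 - t) * (1 - xp) * yp + t" unfolding yp'_def using b0 by simp
  have bB: "b' * (gamma ?p yp' + c) = (1 - t) * (1 - xp) * (?B + c) + 2 * t * (gamma ?p (1/2) + c)" for c
  proof -
    have "b' * (gamma ?p yp' + c) = (b' * yp') * ?p - b' * Lf ?p + b' * c" by (simp add: gamma_Lf algebra_simps)
    also have "\<dots> = (1 - t) * (1 - xp) * (?B + c) + 2 * t * (gamma ?p (1/2) + c)"
      unfolding byp unfolding b'_def by (simp add: gamma_Lf algebra_simps)
    finally show ?thesis .
  qed
  have c1: "(1 - t) * (e2 + ?m) \<le> (1 - t) * ?L1" by (rule mult_left_mono[OF kd(9) t1])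
  have c2: "(1 - t) * ?L2 \<le> (1 - t) * (e2 + ?M)" by (rule mult_left_mono[OF kd(10) t1])
  have "(?xm, ?xp, ym, yp') \<in> Kc rm rp e1"
  proof (rule KcI)
    show "0 \<le> ym" "ym \<le> rm" "rm < rp" using kd by auto
    have "rp * b' \<le> b' * yp'"
    proof -
      have "rp * ((1 - t) * (1 - xp)) \<le> yp * ((1 - t) * (1 - xp))"
        by (rule mult_right_mono) (use kd t1 in auto)
      hence "rp * ((1 - t) * (1 - xp)) \<le> (1 - t) * (1 - xp) * yp" by (simp add: ac_simps)
      moreover have "rp * (2 * t) \<le> t" using rh t by simp
      ultimately show ?thesis unfolding byp by (simp add: b'_def field_simps; argo?)
    qed
    thus "rp \<le> yp'" using b0 by (simp add: mult.commute)
    have "b' * yp' \<le> b' * 1"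
    proof -
      have "(1 - t) * (1 - xp) * yp \<le> (1 - t) * (1 - xp) * 1"
        using kd t1 by (intro mult_left_mono) auto
      thus ?thesis unfolding byp using t by (simp add: b'_def)
    qed
    thus "yp' \<le> 1" using b0 by simp
    show "-1 \<le> ?xm" using kd t1 by simp
    show "?xp \<le> 1" using b0 by simp
    have "(1 - t) * ((xm + 1) + (1 - xp)) \<le> (1 - t) * 2" using kd t1 by (intro mult_left_mono) auto
    thus "?xm \<le> ?xp" unfolding b'_def by (simp add: field_simps; argo?)
    have "(1/2) * ((?xm + 1) * (?A + ?m) + (1 - ?xp) * (gamma ?p yp' + ?m))
        = (1 - t) * ?L1 + t * (gamma ?p (1/2) + ?m)"
      using bB[of ?m] by (simp add: field_simps; argo?)
    thus "e1 + ?m \<le> (1/2) * ((?xm + 1) * (?A + ?m) + (1 - ?xp) * (gamma ?p yp' + ?m))"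
      using c1 unfolding e1 by (simp add: field_simps; argo?)
    have "(1/2) * ((?xm + 1) * (?A + ?M) + (1 - ?xp) * (gamma ?p yp' + ?M))
        = (1 - t) * ?L2 + t * (gamma ?p (1/2) + ?M)"
      using bB[of ?M] by (simp add: field_simps; argo?)
    thus "(1/2) * ((?xm + 1) * (?A + ?M) + (1 - ?xp) * (gamma ?p yp' + ?M)) \<le> e1 + ?M"
      using c2 unfolding e1 by (simp add: field_simps; argo?)
  qed
  moreover have "Ffun rm rp (xm, xp, ym, yp) - e2 \<le> Ffun rm rp (?xm, ?xp, ym, yp') - e1"
  proof -
    have conc: "(1 - t) * (1 - xp) * (- sfun yp) + 2 * t * (- sfun (1/2)) \<le> b' * (- sfun yp')"
    proof (cases "(1 - t) * (1 - xp) = 0")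
      case True
      hence e1: "b' = 2 * t" and e2: "yp' = 1/2" unfolding yp'_def b'_def using t by auto
      show ?thesis unfolding e1 e2 True by simp
    next
      case False
      have "(1 - t) * (1 - xp) * (- sfun yp) + (2 * t) * (- sfun (1/2))
          \<le> ((1 - t) * (1 - xp) + 2 * t) * (- sfun (((1 - t) * (1 - xp) * yp + 2 * t * (1/2)) / ((1 - t) * (1 - xp) + 2 * t)))"
        using kd t1 t r b0[unfolded b'_def] mult_nonneg_nonneg[OF t1, of "1 - xp"] by (intro concave2) auto
      thus ?thesis unfolding yp'_def b'_def by simp
    qed
    have F1: "Ffun rm rp (?xm, ?xp, ym, yp') =
       (1/2) * ((1 - t) * (xm + 1) * (- sfun ym + ?A) + b' * (- sfun yp') + b' * gamma ?p yp')"
      unfolding Ffun_eq by (simp add: field_simps; argo?)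
    have gB: "b' * gamma ?p yp' = (1 - t) * (1 - xp) * ?B + 2 * t * gamma ?p (1/2)"
      using bB[of 0] by simp
    have "t * (Ffun rm rp (xm, xp, ym, yp) - e2) \<le> t * ln 2" using FB[OF r k2] t by (intro mult_left_mono) auto
    thus ?thesis unfolding F1 e1 gB using conc unfolding Ffun_eq sfun_half by (simp add: field_simps; argo?)
  qed
  ultimately show ?thesis by blast
qed

end


context
  fixes rm rp :: real
  assumes r: "0 < rm" "rm < rp" "rp < 1"
begin

lemma mix_left:
  assumes k2: "(xm, xp, ym, yp) \<in> Kc rm rp e2" and t: "0 < t" "t \<le> 1" and rh: "1/2 \<le> rm"
    and e1: "e1 = (1 - t) * e2 + t * gamma (phi_b rm) (1/2)"
  shows "\<exists>k1\<in>Kc rm rp e1. Ffun rm rp (xm, xp, ym, yp) - e2 \<le> Ffun rm rp k1 - e1"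
proof -
  note kd = KcD[OF k2]
  let ?p = "phi_b rm"
  let ?A = "gamma ?p ym" and ?B = "gamma (phi_b rp) yp" and ?m = "m0 rm rp" and ?M = "M0 rm rp"
  let ?L1 = "(1/2) * ((xm + 1) * (?A + ?m) + (1 - xp) * (?B + ?m))"
  let ?L2 = "(1/2) * ((xm + 1) * (?A + ?M) + (1 - xp) * (?B + ?M))"
  define a' where "a' = (1 - t) * (xm + 1) + 2 * t"
  define ym' where "ym' = ((1 - t) * (xm + 1) * ym + t) / a'"
  let ?xm = "a' - 1" and ?xp = "1 - (1 - t) * (1 - xp)"
  have t1: "0 \<le> 1 - t" using t by simp
  have a0: "0 < a'" unfolding a'_def using kd t by (simp add: add_nonneg_pos)
  have aym: "a' * ym' = (1 - t) * (xm + 1) * ym + t" unfolding ym'_def using a0 by simp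
  have aA: "a' * (gamma ?p ym' + c) = (1 - t) * (xm + 1) * (?A + c) + 2 * t * (gamma ?p (1/2) + c)" for c
  proof -
    have "a' * (gamma ?p ym' + c) = (a' * ym') * ?p - a' * Lf ?p + a' * c" by (simp add: gamma_Lf field_simps; argo?)
    also have "\<dots> = (1 - t) * (xm + 1) * (?A + c) + 2 * t * (gamma ?p (1/2) + c)"
      unfolding aym unfolding a'_def by (simp add: gamma_Lf field_simps; argo?)
    finally show ?thesis .
  qed
  have c1: "(1 - t) * (e2 + ?m) \<le> (1 - t) * ?L1" by (rule mult_left_mono[OF kd(9) t1])
  have c2: "(1 - t) * ?L2 \<le> (1 - t) * (e2 + ?M)" by (rule mult_left_mono[OF kd(10) t1])
  have "(?xm, ?xp, ym', yp) \<in> Kc rm rp e1"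
  proof (rule KcI)
    show "rm < rp" "rp \<le> yp" "yp \<le> 1" using kd by auto
    have "0 \<le> a' * ym'" unfolding aym using kd t1 t by simp
    thus "0 \<le> ym'" using a0 by (simp add: zero_le_mult_iff)
    have "a' * ym' \<le> a' * rm"
    proof -
      have "(1 - t) * (xm + 1) * ym \<le> (1 - t) * (xm + 1) * rm"
        using kd t1 by (intro mult_left_mono) auto
      moreover have "t \<le> 2 * t * rm" using rh t by simp
      ultimately show ?thesis unfolding aym by (simp add: a'_def field_simps; argo?)
    qed
    thus "ym' \<le> rm" using a0 by simp
    show "-1 \<le> ?xm" using a0 by simp
    show "?xp \<le> 1" using kd t1 by simp
    have "(1 - t) * ((xm + 1) + (1 - xp)) \<le> (1 - t) * 2" using kd t1 by (intro mult_left_mono) auto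
    thus "?xm \<le> ?xp" unfolding a'_def by (simp add: field_simps; argo?)
    have "(1/2) * ((?xm + 1) * (gamma ?p ym' + ?m) + (1 - ?xp) * (?B + ?m))
        = (1 - t) * ?L1 + t * (gamma ?p (1/2) + ?m)"
      using aA[of ?m] by (simp add: field_simps; argo?)
    thus "e1 + ?m \<le> (1/2) * ((?xm + 1) * (gamma ?p ym' + ?m) + (1 - ?xp) * (?B + ?m))"
      using c1 unfolding e1 by (simp add: field_simps; argo?)
    have "(1/2) * ((?xm + 1) * (gamma ?p ym' + ?M) + (1 - ?xp) * (?B + ?M))
        = (1 - t) * ?L2 + t * (gamma ?p (1/2) + ?M)"
      using aA[of ?M] by (simp add: field_simps; argo?)
    thus "(1/2) * ((?xm + 1) * (gamma ?p ym' + ?M) + (1 - ?xp) * (?B + ?M)) \<le> e1 + ?M"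
      using c2 unfolding e1 by (simp add: field_simps; argo?)
  qed
  moreover have "Ffun rm rp (xm, xp, ym, yp) - e2 \<le> Ffun rm rp (?xm, ?xp, ym', yp) - e1"
  proof -
    have conc: "(1 - t) * (xm + 1) * (- sfun ym) + 2 * t * (- sfun (1/2)) \<le> a' * (- sfun ym')"
    proof (cases "(1 - t) * (xm + 1) = 0")
      case True
      hence e1: "a' = 2 * t" and e2: "ym' = 1/2" unfolding ym'_def a'_def using t by auto
      show ?thesis unfolding e1 e2 True by simp
    next
      case False
      have "(1 - t) * (xm + 1) * (- sfun ym) + (2 * t) * (- sfun (1/2))
          \<le> ((1 - t) * (xm + 1) + 2 * t) * (- sfun (((1 - t) * (xm + 1) * ym + 2 * t * (1/2)) / ((1 - t) * (xm + 1) + 2 * t)))"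
        using kd t1 t r a0[unfolded a'_def] mult_nonneg_nonneg[OF t1, of "xm + 1"] by (intro concave2) auto
      thus ?thesis unfolding ym'_def a'_def by simp
    qed
    have F1: "Ffun rm rp (?xm, ?xp, ym', yp) =
       (1/2) * (a' * (- sfun ym') + a' * gamma ?p ym' + (1 - t) * (1 - xp) * (- sfun yp + ?B))"
      unfolding Ffun_eq by (simp add: field_simps; argo?)
    have gA: "a' * gamma ?p ym' = (1 - t) * (xm + 1) * ?A + 2 * t * gamma ?p (1/2)"
      using aA[of 0] by simp
    have "t * (Ffun rm rp (xm, xp, ym, yp) - e2) \<le> t * ln 2" using FB[OF r k2] t by (intro mult_left_mono) auto
    thus ?thesis unfolding F1 e1 gA using conc unfolding Ffun_eq sfun_half by (simp add: field_simps; argo?)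
  qed
  ultimately show ?thesis by blast
qed

lemma mix:
  assumes k2: "k2 \<in> Kc rm rp e2" and e: "epk rm rp \<le> e1" "e1 \<le> e2"
  shows "\<exists>k1\<in>Kc rm rp e1. Ffun rm rp k2 - e2 \<le> Ffun rm rp k1 - e1"
proof (cases "e1 = e2")
  case True thus ?thesis using k2 by blast
next
  case False
  hence lt: "epk rm rp < e2" using e by simp
  define t where "t = (e2 - e1) / (e2 - epk rm rp)"
  have t: "0 < t" "t \<le> 1" unfolding t_def using e lt False by (auto simp: field_simps)
  have td: "t * (e2 - epk rm rp) = e2 - e1" unfolding t_def using lt by simp
  have e1: "e1 = (1 - t) * e2 + t * epk rm rp" using td by (simp add: algebra_simps; argo)
  obtain xm xp ym yp where kk: "k2 = (xm, xp, ym, yp)" by (cases k2) auto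
  have k2': "(xm, xp, ym, yp) \<in> Kc rm rp e2" using k2 kk by simp
  consider "rp < 1/2" | "\<not> rp < 1/2" "1/2 < rm" | "rm \<le> 1/2" "1/2 \<le> rp" by linarith
  thus ?thesis
  proof cases
    case 1
    have "epk rm rp = gamma (phi_b rp) (1/2)" using 1 by (simp add: epk_def c0_def gamma_Lf)
    thus ?thesis using mix_right[OF r k2' t] 1 e1 kk by auto
  next
    case 2
    have "epk rm rp = gamma (phi_b rm) (1/2)" using 2 by (simp add: epk_def c0_def gamma_Lf)
    thus ?thesis using mix_left[OF k2' t] 2 e1 kk by auto
  next
    case 3
    have "epk rm rp = - ln 2" using 3 by (simp add: epk_def c0_def Lf_0)
    thus ?thesis using mix_mid[OF r k2' _ _ _ M0_half[OF r 3], of t e1] t e1 kk by auto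
  qed
qed

end


lemma SV: "Vminus rm rp \<rho> + SS \<rho> = Jf rm rp \<rho> - Vbar rm rp"
  by (simp add: Vminus_def Jf_def)

context
  fixes rm rp :: real
  assumes r: "0 < rm" "rm < rp" "rp < 1"
begin

lemma hmin_le_hmax: "hmin rm rp \<le> hmax rm rp"
  using hmin_le_epk[OF r] epk_le_hmax[OF r] by linarith

lemma Kne: "Kc rm rp e \<noteq> {} \<longleftrightarrow> hmin rm rp \<le> e \<and> e \<le> hmax rm rp"
proof
  assume "Kc rm rp e \<noteq> {}"
  then obtain xm xp ym yp where "(xm, xp, ym, yp) \<in> Kc rm rp e" by auto
  then obtain \<rho> where "\<rho> \<in> Mset" "Jf rm rp \<rho> = e" using construct[OF r] by blast
  thus "hmin rm rp \<le> e \<and> e \<le> hmax rm rp" using J_ge_hmin[OF r] J_le_hmax[OF r] by auto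
next
  assume e: "hmin rm rp \<le> e \<and> e \<le> hmax rm rp"
  show "Kc rm rp e \<noteq> {}"
  proof (cases "e \<le> epk rm rp")
    case True thus ?thesis using K_low[OF r] e by blast
  next
    case False
    obtain k2 where "k2 \<in> Kc rm rp (hmax rm rp)" using K_hmax[OF r] by blast
    thus ?thesis using mix[OF r, of k2 "hmax rm rp" e] False e by auto
  qed
qed

lemma UB:
  assumes \<rho>: "\<rho> \<in> Mset" and J: "Jf rm rp \<rho> = e"
  shows "\<exists>k\<in>Kc rm rp e. SS \<rho> \<le> Ffun rm rp k - e"
proof (cases "e \<le> epk rm rp")
  case True
  have "hmin rm rp \<le> e" using J_ge_hmin[OF r \<rho>] J by simp
  then obtain k where k: "k \<in> Kc rm rp e" "Ffun rm rp k - e = Glow rm rp e" using K_low[OF r] True by blast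
  have s: "SS \<rho> \<le> Glow rm rp e" using SS_low[OF r \<rho> J True] .
  show ?thesis
  proof (rule bexI[of _ k])
    show "SS \<rho> \<le> Ffun rm rp k - e" using k s by linarith
  qed (rule k(1))
next
  case False
  obtain k' e' where k': "k' \<in> Kc rm rp e'" "Jf rm rp \<rho> \<le> e'" "SS \<rho> \<le> Ffun rm rp k' - e'"
    using zone[OF r \<rho>] by blast
  obtain k where "k \<in> Kc rm rp e" "Ffun rm rp k' - e' \<le> Ffun rm rp k - e"
    using mix[OF r k'(1), of e] False J k'(2) by auto
  thus ?thesis using k'(3) by force
qed

lemma attain: "hmin rm rp \<le> e \<Longrightarrow> e \<le> hmax rm rp \<Longrightarrow> \<exists>\<rho>\<in>Mset. Jf rm rp \<rho> = e"
proof -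
  assume "hmin rm rp \<le> e" "e \<le> hmax rm rp"
  hence "Kc rm rp e \<noteq> {}" using Kne[of e] by simp
  then obtain k where "k \<in> Kc rm rp e" by blast
  moreover obtain xm xp ym yp where "k = (xm, xp, ym, yp)" by (cases k) auto
  ultimately show ?thesis using construct[OF r] by blast
qed

lemma Elo: "Eminf_lo rm rp = hmin rm rp - Vbar rm rp"
  unfolding Eminf_lo_def
proof (rule cInf_eq_minimum)
  obtain \<rho> where "\<rho> \<in> Mset" "Jf rm rp \<rho> = hmin rm rp" using attain hmin_le_hmax by auto
  thus "hmin rm rp - Vbar rm rp \<in> (\<lambda>\<rho>. SS \<rho> + Vminus rm rp \<rho>) ` Mset"
    using SV[of rm rp \<rho>] by (auto simp: add.commute image_iff intro!: bexI[of _ \<rho>])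
next
  fix x assume "x \<in> (\<lambda>\<rho>. SS \<rho> + Vminus rm rp \<rho>) ` Mset"
  then obtain \<rho> where "\<rho> \<in> Mset" "x = SS \<rho> + Vminus rm rp \<rho>" by auto
  thus "hmin rm rp - Vbar rm rp \<le> x" using SV[of rm rp \<rho>] J_ge_hmin[OF r] by (simp add: add.commute)
qed

lemma Ehi: "Eminf_hi rm rp = hmax rm rp - Vbar rm rp"
  unfolding Eminf_hi_def
proof (rule cSup_eq_maximum)
  obtain \<rho> where "\<rho> \<in> Mset" "Jf rm rp \<rho> = hmax rm rp" using attain hmin_le_hmax by auto
  thus "hmax rm rp - Vbar rm rp \<in> (\<lambda>\<rho>. SS \<rho> + Vminus rm rp \<rho>) ` Mset"
    using SV[of rm rp \<rho>] by (auto simp: add.commute image_iff intro!: bexI[of _ \<rho>])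
next
  fix x assume "x \<in> (\<lambda>\<rho>. SS \<rho> + Vminus rm rp \<rho>) ` Mset"
  then obtain \<rho> where "\<rho> \<in> Mset" "x = SS \<rho> + Vminus rm rp \<rho>" by auto
  thus "x \<le> hmax rm rp - Vbar rm rp" using SV[of rm rp \<rho>] J_le_hmax[OF r] by (simp add: add.commute)
qed

end

theorem proposition4p2:
  fixes rm rp E :: real
  assumes "0 < rm" and "rm < rp" and "rp < 1" and "0 \<le> E"
  shows "Sminus rm rp E = Sup ((\<lambda>k. ereal (Ffun rm rp k)) ` Kset rm rp E) - ereal (E + Vbar rm rp)
     \<and> (Kset rm rp E \<noteq> {} \<longleftrightarrow> E \<in> {Eminf_lo rm rp .. Eminf_hi rm rp})"
proof -
  note r = assms(1-3)
  define e where "e = E + Vbar rm rp"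
  have KK: "Kset rm rp E = Kc rm rp e" unfolding e_def by (rule Kset_Kc)
  have set_eq: "{\<rho> \<in> Mset. Vminus rm rp \<rho> + SS \<rho> = E} = {\<rho> \<in> Mset. Jf rm rp \<rho> = e}"
    unfolding SV e_def by auto
  have part2: "Kset rm rp E \<noteq> {} \<longleftrightarrow> E \<in> {Eminf_lo rm rp .. Eminf_hi rm rp}"
    unfolding KK Kne[OF r] Elo[OF r] Ehi[OF r] e_def by auto
  have part1: "Sminus rm rp E = Sup ((\<lambda>k. ereal (Ffun rm rp k)) ` Kc rm rp e) - ereal e"
  proof (cases "Kc rm rp e = {}")
    case True
    have E0: "{\<rho> \<in> Mset. Jf rm rp \<rho> = e} = {}" using UB[OF r] True by blast
    show ?thesis unfolding Sminus_def set_eq E0 True by (simp add: bot_ereal_def)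
  next
    case False
    let ?S = "(\<lambda>\<rho>. ereal (SS \<rho>)) ` {\<rho> \<in> Mset. Jf rm rp \<rho> = e}"
    let ?T = "(\<lambda>k. ereal (Ffun rm rp k)) ` Kc rm rp e"
    have le1: "Sup ?S \<le> Sup ?T - ereal e"
    proof (rule Sup_least)
      fix x assume "x \<in> ?S"
      then obtain \<rho> where \<rho>: "\<rho> \<in> Mset" "Jf rm rp \<rho> = e" "x = ereal (SS \<rho>)" by auto
      then obtain k where k: "k \<in> Kc rm rp e" "SS \<rho> \<le> Ffun rm rp k - e" using UB[OF r] by blast
      have "x \<le> ereal (Ffun rm rp k) - ereal e" using \<rho>(3) k(2) by simp
      also have "\<dots> \<le> Sup ?T - ereal e" using k(1) by (intro ereal_minus_mono Sup_upper) auto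
      finally show "x \<le> Sup ?T - ereal e" .
    qed
    have "Sup ?T \<le> Sup ?S + ereal e"
    proof (rule Sup_least)
      fix y assume "y \<in> ?T"
      then obtain k where k: "k \<in> Kc rm rp e" "y = ereal (Ffun rm rp k)" by auto
      obtain xm xp ym yp where kk: "k = (xm, xp, ym, yp)" by (cases k) auto
      obtain \<rho> where \<rho>: "\<rho> \<in> Mset" "Jf rm rp \<rho> = e" "SS \<rho> = Ffun rm rp k - e"
        using construct[OF r] k(1) kk by blast
      have mem: "ereal (SS \<rho>) \<in> ?S" using \<rho>(1,2) by blast
      have "ereal (SS \<rho>) \<le> Sup ?S" using mem by (rule Sup_upper)
      hence "ereal (SS \<rho>) + ereal e \<le> Sup ?S + ereal e" by (rule add_right_mono)
      thus "y \<le> Sup ?S + ereal e" using \<rho>(3) k(2) by simp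
    qed
    hence le2: "Sup ?T - ereal e \<le> Sup ?S" by (simp add: ereal_minus_le)
    show ?thesis unfolding Sminus_def set_eq using le1 le2 by (rule order.antisym)
  qed
  show ?thesis using part1 part2 unfolding KK e_def by simp
qed


end
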